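(* Let $G$ be a BDH graph with no universal vertex and let $v\in V(G)$. Then one of the following holds: (1) $\mathbf{H}(G-v)$ has more connected components than $\mathbf{H}(G)$; (2) $\mathbf{H}(G-v)$ is (isomorphic to) an induced subgraph of $\mathbf{H}(G)$; (3) $\mathbf{H}(G-v)$ is (isomorphic to) a contraction of $\mathbf{H}(G)$, i.e., obtained from it by contracting arcs.
   Context: For a bipartite graph $G$ with color classes $X,Y$, a biclique is a vertex set inducing a complete bipartite subgraph, with shores $X(B)=B\cap X$, $Y(B)=B\cap Y$; $\mathcal{B}(G)$ is the set of maximal bicliques ordered by $B\preceq B'\iff X(B)\subseteq X(B')$, and $\mathbf{H}(G)$ is the transitive reduction of $(\mathcal{B}(G),\preceq)$ (arc $(B,B')$ iff $B'$ covers $B$). A graph is distance hereditary if distances in every connected induced subgraph equal distances in the graph; BDH means bipartite distance hereditary (equivalently: bipartite, no induced chordless cycle of length $\ge6$, no induced domino, a domino being $C_6$ plus a chord between antipodal vertices). A universal vertex is adjacent to all vertices of the opposite color class. *)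

theory Defs
  imports Main "HOL-Library.Extended_Nat"
begin

definition bipartite_graph :: "'a set \<Rightarrow> 'a set \<Rightarrow> ('a \<times> 'a) set \<Rightarrow> bool" where
  "bipartite_graph X Y E \<longleftrightarrow> finite X \<and> finite Y \<and> X \<inter> Y = {} \<and> E \<subseteq> X \<times> Y"

definition adj :: "('a \<times> 'a) set \<Rightarrow> 'a \<Rightarrow> 'a \<Rightarrow> bool" where
  "adj E u w \<longleftrightarrow> (u, w) \<in> E \<or> (w, u) \<in> E"

definition is_walk_in :: "('a \<times> 'a) set \<Rightarrow> 'a set \<Rightarrow> 'a list \<Rightarrow> bool" where
  "is_walk_in E S p \<longleftrightarrow> p \<noteq> [] \<and> set p \<subseteq> S \<and>
     (\<forall>i. Suc i < length p \<longrightarrow> adj E (p ! i) (p ! Suc i))"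

text \<open>Distance between u and w in the subgraph induced by S (infinity if no walk).\<close>
definition gdist :: "('a \<times> 'a) set \<Rightarrow> 'a set \<Rightarrow> 'a \<Rightarrow> 'a \<Rightarrow> enat" where
  "gdist E S u w = Inf {enat (length p - 1) | p. is_walk_in E S p \<and> hd p = u \<and> last p = w}"

definition connected_in :: "('a \<times> 'a) set \<Rightarrow> 'a set \<Rightarrow> bool" where
  "connected_in E S \<longleftrightarrow> (\<forall>u\<in>S. \<forall>w\<in>S. \<exists>p. is_walk_in E S p \<and> hd p = u \<and> last p = w)"

definition distance_hereditary :: "'a set \<Rightarrow> ('a \<times> 'a) set \<Rightarrow> bool" where
  "distance_hereditary V E \<longleftrightarrow>
     (\<forall>S \<subseteq> V. connected_in E S \<longrightarrow> (\<forall>u\<in>S. \<forall>w\<in>S. gdist E S u w = gdist E V u w))"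

definition BDH :: "'a set \<Rightarrow> 'a set \<Rightarrow> ('a \<times> 'a) set \<Rightarrow> bool" where
  "BDH X Y E \<longleftrightarrow> bipartite_graph X Y E \<and> distance_hereditary (X \<union> Y) E"

definition has_universal_vertex :: "'a set \<Rightarrow> 'a set \<Rightarrow> ('a \<times> 'a) set \<Rightarrow> bool" where
  "has_universal_vertex X Y E \<longleftrightarrow>
     (\<exists>x\<in>X. \<forall>y\<in>Y. (x, y) \<in> E) \<or> (\<exists>y\<in>Y. \<forall>x\<in>X. (x, y) \<in> E)"

definition del_edges :: "('a \<times> 'a) set \<Rightarrow> 'a \<Rightarrow> ('a \<times> 'a) set" where
  "del_edges E v = {e \<in> E. fst e \<noteq> v \<and> snd e \<noteq> v}"

definition biclique :: "'a set \<Rightarrow> 'a set \<Rightarrow> ('a \<times> 'a) set \<Rightarrow> 'a set \<Rightarrow> bool" where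
  "biclique X Y E B \<longleftrightarrow> B \<subseteq> X \<union> Y \<and> B \<inter> X \<noteq> {} \<and> B \<inter> Y \<noteq> {} \<and>
     (\<forall>x\<in>B \<inter> X. \<forall>y\<in>B \<inter> Y. (x, y) \<in> E)"

definition max_bicliques :: "'a set \<Rightarrow> 'a set \<Rightarrow> ('a \<times> 'a) set \<Rightarrow> 'a set set" where
  "max_bicliques X Y E = {B. biclique X Y E B \<and> \<not> (\<exists>B'. biclique X Y E B' \<and> B \<subset> B')}"

definition bc_le :: "'a set \<Rightarrow> 'a set \<Rightarrow> 'a set \<Rightarrow> bool" where
  "bc_le X B B' \<longleftrightarrow> B \<inter> X \<subseteq> B' \<inter> X"

definition bc_less :: "'a set \<Rightarrow> 'a set \<Rightarrow> 'a set \<Rightarrow> bool" where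
  "bc_less X B B' \<longleftrightarrow> bc_le X B B' \<and> \<not> bc_le X B' B"

type_synonym 'b digraph = "'b set \<times> ('b \<times> 'b) set"

text \<open>H(G): transitive reduction (Hasse diagram) of the poset of maximal bicliques;
  arc (B,B') iff B' covers B.\<close>
definition Hgraph :: "'a set \<Rightarrow> 'a set \<Rightarrow> ('a \<times> 'a) set \<Rightarrow> 'a set digraph" where
  "Hgraph X Y E =
    (max_bicliques X Y E,
     {(B, B'). B \<in> max_bicliques X Y E \<and> B' \<in> max_bicliques X Y E \<and> bc_less X B B' \<and>
        \<not> (\<exists>C\<in>max_bicliques X Y E. bc_less X B C \<and> bc_less X C B')})"

definition conn_rel :: "'b set \<Rightarrow> ('b \<times> 'b) set \<Rightarrow> ('b \<times> 'b) set" where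
  "conn_rel V F = {(u, w). u \<in> V \<and> w \<in> V \<and> (u, w) \<in> ((F \<inter> V \<times> V) \<union> (F \<inter> V \<times> V)\<inverse>)\<^sup>*}"

definition num_components :: "'b digraph \<Rightarrow> nat" where
  "num_components H = card (fst H // conn_rel (fst H) (snd H))"

definition digraph_iso :: "'b digraph \<Rightarrow> 'c digraph \<Rightarrow> bool" where
  "digraph_iso H1 H2 \<longleftrightarrow> (\<exists>f. bij_betw f (fst H1) (fst H2) \<and>
     (\<forall>u\<in>fst H1. \<forall>w\<in>fst H1. (u, w) \<in> snd H1 \<longleftrightarrow> (f u, f w) \<in> snd H2))"

definition iso_induced_subgraph :: "'b digraph \<Rightarrow> 'c digraph \<Rightarrow> bool" where
  "iso_induced_subgraph H1 H2 \<longleftrightarrow> (\<exists>f. inj_on f (fst H1) \<and> f ` fst H1 \<subseteq> fst H2 \<and>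
     (\<forall>u\<in>fst H1. \<forall>w\<in>fst H1. (u, w) \<in> snd H1 \<longleftrightarrow> (f u, f w) \<in> snd H2))"

text \<open>Contracting a sequence of
  arcs one by one yields the same result as contracting the set of them.\<close>
definition contract :: "'b digraph \<Rightarrow> ('b \<times> 'b) set \<Rightarrow> 'b set digraph" where
  "contract H F =
    (let V' = fst H // conn_rel (fst H) F in
     (V', {(C, D). C \<in> V' \<and> D \<in> V' \<and> C \<noteq> D \<and> (\<exists>u\<in>C. \<exists>w\<in>D. (u, w) \<in> snd H)}))"

definition iso_contraction :: "'b digraph \<Rightarrow> 'c digraph \<Rightarrow> bool" where
  "iso_contraction H1 H2 \<longleftrightarrow> (\<exists>F \<subseteq> snd H2. digraph_iso H1 (contract H2 F))"

end

theory Submission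
  imports Defs
begin

definition up :: "'a set \<Rightarrow> ('a \<times> 'a) set \<Rightarrow> 'a set \<Rightarrow> 'a set" where
  "up Y E A = {y\<in>Y. \<forall>x\<in>A. (x,y)\<in>E}"
definition dn :: "'a set \<Rightarrow> ('a \<times> 'a) set \<Rightarrow> 'a set \<Rightarrow> 'a set" where
  "dn X E B = {x\<in>X. \<forall>y\<in>B. (x,y)\<in>E}"

locale bip =
  fixes X Y :: "'a set" and E :: "('a\<times>'a) set"
  assumes bg: "bipartite_graph X Y E"
begin

abbreviation "MB \<equiv> max_bicliques X Y E"
abbreviation "AR \<equiv> snd (Hgraph X Y E)"
abbreviation "U \<equiv> up Y E"
abbreviation "D \<equiv> dn X E"

lemma finX: "finite X" and finY: "finite Y" and disj: "X \<inter> Y = {}" and EXY: "E \<subseteq> X \<times> Y"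
  using bg unfolding bipartite_graph_def by auto

lemma U_sub: "U A \<subseteq> Y" and D_sub: "D B \<subseteq> X" unfolding up_def dn_def by auto

lemma U_anti: "A \<subseteq> A' \<Longrightarrow> U A' \<subseteq> U A" unfolding up_def by auto
lemma D_anti: "B \<subseteq> B' \<Longrightarrow> D B' \<subseteq> D B" unfolding dn_def by auto
lemma DU: "A \<subseteq> X \<Longrightarrow> A \<subseteq> D (U A)" unfolding up_def dn_def by auto
lemma UD: "B \<subseteq> Y \<Longrightarrow> B \<subseteq> U (D B)" unfolding up_def dn_def by auto
lemma UDU: "A \<subseteq> X \<Longrightarrow> U (D (U A)) = U A"
  by (meson DU UD U_anti U_sub subset_antisym)

lemma mb_iff: "B \<in> MB \<longleftrightarrow> B \<subseteq> X \<union> Y \<and> B \<inter> X \<noteq> {} \<and> B \<inter> Y \<noteq> {} \<and>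
    B \<inter> Y = U (B \<inter> X) \<and> B \<inter> X = D (B \<inter> Y)"
proof
  assume B: "B \<in> MB"
  hence bc: "biclique X Y E B" and mx: "\<And>B'. biclique X Y E B' \<Longrightarrow> \<not> B \<subset> B'"
    unfolding max_bicliques_def by auto
  have bB: "B \<subseteq> X \<union> Y" "B \<inter> X \<noteq> {}" "B \<inter> Y \<noteq> {}" and bE: "\<And>x y. x \<in> B \<inter> X \<Longrightarrow> y \<in> B \<inter> Y \<Longrightarrow> (x,y) \<in> E"
    using bc unfolding biclique_def by auto
  have s1: "B \<inter> Y \<subseteq> U (B \<inter> X)" using bE unfolding up_def by blast
  have s2: "B \<inter> X \<subseteq> D (B \<inter> Y)" using bE unfolding dn_def by blast
  have e1: "U (B \<inter> X) \<subseteq> B"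
  proof
    fix y assume y: "y \<in> U (B \<inter> X)"
    hence yY: "y \<in> Y" and yE: "\<And>x. x \<in> B \<inter> X \<Longrightarrow> (x,y) \<in> E" unfolding up_def by auto
    show "y \<in> B"
    proof (rule ccontr)
      assume "y \<notin> B"
      have yX: "y \<notin> X" using yY disj by auto
      have "insert y B \<inter> X = B \<inter> X" using yX by auto
      moreover have "insert y B \<inter> Y = insert y (B \<inter> Y)" using yY by auto
      ultimately have "biclique X Y E (insert y B)" using bB bE yE yY unfolding biclique_def by auto
      moreover have "B \<subset> insert y B" using \<open>y \<notin> B\<close> by auto
      ultimately show False using mx by blast
    qed
  qed
  have e2: "D (B \<inter> Y) \<subseteq> B"
  proof
    fix x assume x: "x \<in> D (B \<inter> Y)"
    hence xX: "x \<in> X" and xE: "\<And>y. y \<in> B \<inter> Y \<Longrightarrow> (x,y) \<in> E" unfolding dn_def by auto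
    show "x \<in> B"
    proof (rule ccontr)
      assume "x \<notin> B"
      have xY: "x \<notin> Y" using xX disj by auto
      have "insert x B \<inter> Y = B \<inter> Y" using xY by auto
      moreover have "insert x B \<inter> X = insert x (B \<inter> X)" using xX by auto
      ultimately have "biclique X Y E (insert x B)" using bB bE xE xX unfolding biclique_def by auto
      moreover have "B \<subset> insert x B" using \<open>x \<notin> B\<close> by auto
      ultimately show False using mx by blast
    qed
  qed
  have "U (B \<inter> X) \<subseteq> B \<inter> Y" using e1 U_sub[of "B \<inter> X"] by (rule Int_greatest)
  hence "B \<inter> Y = U (B \<inter> X)" using s1 by (rule subset_antisym[rotated])
  moreover have "D (B \<inter> Y) \<subseteq> B \<inter> X" using e2 D_sub[of "B \<inter> Y"] by (rule Int_greatest)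
  hence "B \<inter> X = D (B \<inter> Y)" using s2 by (rule subset_antisym[rotated])
  ultimately show "B \<subseteq> X \<union> Y \<and> B \<inter> X \<noteq> {} \<and> B \<inter> Y \<noteq> {} \<and> B \<inter> Y = U (B \<inter> X) \<and> B \<inter> X = D (B \<inter> Y)"
    using bB by blast
next
  assume H: "B \<subseteq> X \<union> Y \<and> B \<inter> X \<noteq> {} \<and> B \<inter> Y \<noteq> {} \<and> B \<inter> Y = U (B \<inter> X) \<and> B \<inter> X = D (B \<inter> Y)"
  hence H1: "B \<subseteq> X \<union> Y" "B \<inter> X \<noteq> {}" "B \<inter> Y \<noteq> {}" and H2: "B \<inter> Y = U (B \<inter> X)" and H3: "B \<inter> X = D (B \<inter> Y)"
    by blast+
  have "\<forall>x\<in>B \<inter> X. \<forall>y\<in>B \<inter> Y. (x, y) \<in> E"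
  proof (intro ballI)
    fix x y assume "x \<in> B \<inter> X" "y \<in> B \<inter> Y"
    thus "(x,y) \<in> E" using H2 unfolding up_def by blast
  qed
  hence bc: "biclique X Y E B" using H1 unfolding biclique_def by blast
  have "\<not> B \<subset> B'" if b': "biclique X Y E B'" for B'
  proof
    assume sub: "B \<subset> B'"
    have b'E: "\<And>x y. x \<in> B' \<inter> X \<Longrightarrow> y \<in> B' \<inter> Y \<Longrightarrow> (x,y) \<in> E" and b'V: "B' \<subseteq> X \<union> Y"
      using b' unfolding biclique_def by auto
    have "B' \<inter> Y \<subseteq> U (B' \<inter> X)" using b'E unfolding up_def by blast
    also have "\<dots> \<subseteq> U (B \<inter> X)" using sub by (intro U_anti) blast
    finally have y: "B' \<inter> Y \<subseteq> B" using H2 by blast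
    have "B' \<inter> X \<subseteq> D (B' \<inter> Y)" using b'E unfolding dn_def by blast
    also have "\<dots> \<subseteq> D (B \<inter> Y)" using sub by (intro D_anti) blast
    finally have x: "B' \<inter> X \<subseteq> B" using H3 by blast
    from x y b'V have "B' \<subseteq> B" by blast
    with sub show False by blast
  qed
  thus "B \<in> MB" using bc unfolding max_bicliques_def by blast
qed

lemma mb_V: "B \<in> MB \<Longrightarrow> B \<subseteq> X \<union> Y" by (drule mb_iff[THEN iffD1], elim conjE, assumption)
lemma mb_Xne: "B \<in> MB \<Longrightarrow> B \<inter> X \<noteq> {}" by (drule mb_iff[THEN iffD1], elim conjE, assumption)
lemma mb_Yne: "B \<in> MB \<Longrightarrow> B \<inter> Y \<noteq> {}" by (drule mb_iff[THEN iffD1], elim conjE, assumption)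
lemma mb_int: "B \<in> MB \<Longrightarrow> B \<inter> Y = U (B \<inter> X)" by (drule mb_iff[THEN iffD1], elim conjE, assumption)
lemma mb_ext: "B \<in> MB \<Longrightarrow> B \<inter> X = D (B \<inter> Y)" by (drule mb_iff[THEN iffD1], elim conjE, assumption)

lemma mb_split: "B \<in> MB \<Longrightarrow> B = (B \<inter> X) \<union> U (B \<inter> X)"
proof -
  assume "B \<in> MB"
  hence "B \<subseteq> X \<union> Y" "B \<inter> Y = U (B \<inter> X)" using mb_V mb_int by auto
  thus ?thesis by blast
qed

lemma mb_eq: assumes "B \<in> MB" "B' \<in> MB" "B \<inter> X = B' \<inter> X" shows "B = B'"
proof -
  have "B = B \<inter> X \<union> U (B \<inter> X)" using assms(1) by (rule mb_split)
  also have "\<dots> = B' \<inter> X \<union> U (B' \<inter> X)" using assms(3) by simp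
  also have "\<dots> = B'" using assms(2) by (rule mb_split[symmetric])
  finally show ?thesis .
qed

lemma mb_ext_le: assumes a: "B \<in> MB" "B' \<in> MB"
  shows "B \<inter> X \<subseteq> B' \<inter> X \<longleftrightarrow> B' \<inter> Y \<subseteq> B \<inter> Y"
proof
  assume "B \<inter> X \<subseteq> B' \<inter> X"
  hence "U (B' \<inter> X) \<subseteq> U (B \<inter> X)" by (rule U_anti)
  thus "B' \<inter> Y \<subseteq> B \<inter> Y" using mb_int[OF a(1)] mb_int[OF a(2)] by simp
next
  assume "B' \<inter> Y \<subseteq> B \<inter> Y"
  hence "D (B \<inter> Y) \<subseteq> D (B' \<inter> Y)" by (rule D_anti)
  thus "B \<inter> X \<subseteq> B' \<inter> X" using mb_ext[OF a(1)] mb_ext[OF a(2)] by simp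
qed

lemma mb_ext_lt: assumes a: "B \<in> MB" "B' \<in> MB"
  shows "B \<inter> X \<subset> B' \<inter> X \<longleftrightarrow> B' \<inter> Y \<subset> B \<inter> Y"
  using mb_ext_le[OF a] mb_ext_le[OF a(2,1)] unfolding psubset_eq by blast

lemma finite_MB: "finite MB"
proof -
  have "MB \<subseteq> Pow (X \<union> Y)" using mb_V by auto
  thus ?thesis using finX finY finite_subset by blast
qed

definition cl :: "'a set \<Rightarrow> 'a set" where "cl A = D (U A) \<union> U A"

lemma cl_mb: assumes "A \<subseteq> X" "A \<noteq> {}" "U A \<noteq> {}"
  shows "cl A \<in> MB" "cl A \<inter> X = D (U A)" "cl A \<inter> Y = U A" "A \<subseteq> cl A \<inter> X"
proof -
  have x: "cl A \<inter> X = D (U A)" unfolding cl_def using D_sub U_sub disj by blast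
  have y: "cl A \<inter> Y = U A" unfolding cl_def using D_sub U_sub disj by blast
  show "cl A \<inter> X = D (U A)" "cl A \<inter> Y = U A" by fact+
  show "A \<subseteq> cl A \<inter> X" using x DU[OF assms(1)] by auto
  have "cl A \<subseteq> X \<union> Y" unfolding cl_def using D_sub U_sub by blast
  moreover have "cl A \<inter> X \<noteq> {}" using x DU[OF assms(1)] assms(2) by blast
  moreover have "cl A \<inter> Y \<noteq> {}" using y assms(3) by simp
  moreover have "cl A \<inter> Y = U (cl A \<inter> X)" unfolding x y UDU[OF assms(1)] ..
  moreover have "cl A \<inter> X = D (cl A \<inter> Y)" unfolding x y ..
  ultimately show "cl A \<in> MB" unfolding mb_iff by blast
qed

lemma cl_of_mb: assumes "B \<in> MB" shows "cl (B \<inter> X) = B"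
proof -
  have "cl (B \<inter> X) = D (B \<inter> Y) \<union> B \<inter> Y" unfolding cl_def using mb_int[OF assms] by simp
  also have "\<dots> = B \<inter> X \<union> B \<inter> Y" using mb_ext[OF assms] by simp
  also have "\<dots> = B" using mb_V[OF assms] by blast
  finally show ?thesis .
qed

lemma cl_le: assumes "B \<in> MB" "A \<subseteq> B \<inter> X" shows "D (U A) \<subseteq> B \<inter> X"
proof -
  have "U (B \<inter> X) \<subseteq> U A" using assms(2) by (rule U_anti)
  hence "D (U A) \<subseteq> D (U (B \<inter> X))" by (rule D_anti)
  also have "D (U (B \<inter> X)) = B \<inter> X" using mb_int[OF assms(1)] mb_ext[OF assms(1)] by metis
  finally show ?thesis .
qed

lemma arc_iff: "(B, B') \<in> AR \<longleftrightarrow> B \<in> MB \<and> B' \<in> MB \<and> B \<inter> X \<subset> B' \<inter> X \<and>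
   \<not> (\<exists>C\<in>MB. B \<inter> X \<subset> C \<inter> X \<and> C \<inter> X \<subset> B' \<inter> X)"
  unfolding Hgraph_def bc_less_def bc_le_def by auto

lemma AR_sub: "AR \<subseteq> MB \<times> MB" using arc_iff by auto

lemma lt_trancl: assumes "B \<in> MB" "B' \<in> MB" "B \<inter> X \<subset> B' \<inter> X" shows "(B, B') \<in> AR\<^sup>+"
  using assms
proof (induction "card (B' \<inter> X - B \<inter> X)" arbitrary: B B' rule: less_induct)
  case less
  show ?case
  proof (cases "\<exists>C\<in>MB. B \<inter> X \<subset> C \<inter> X \<and> C \<inter> X \<subset> B' \<inter> X")
    case False
    hence "(B, B') \<in> AR" using less.prems by (simp add: arc_iff)
    thus ?thesis by (rule r_into_trancl)
  next
    case True
    then obtain C where C: "C \<in> MB" "B \<inter> X \<subset> C \<inter> X" "C \<inter> X \<subset> B' \<inter> X" by blast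
    have f: "finite (B' \<inter> X - B \<inter> X)" using finX by auto
    have "card (C \<inter> X - B \<inter> X) < card (B' \<inter> X - B \<inter> X)"
      by (rule psubset_card_mono[OF f]) (use C in blast)
    hence 1: "(B, C) \<in> AR\<^sup>+" using less.hyps less.prems(1) C(1,2) by blast
    have "card (B' \<inter> X - C \<inter> X) < card (B' \<inter> X - B \<inter> X)"
      by (rule psubset_card_mono[OF f]) (use C in blast)
    hence 2: "(C, B') \<in> AR\<^sup>+" using less.hyps less.prems(2) C(1,3) by blast
    show ?thesis using 1 2 by (rule trancl_trans)
  qed
qed

lemma arc_lt: "(B, B') \<in> AR \<Longrightarrow> B \<inter> X \<subset> B' \<inter> X" by (simp add: arc_iff)
lemma arc_mb: "(B, B') \<in> AR \<Longrightarrow> B \<in> MB \<and> B' \<in> MB" by (simp add: arc_iff)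

lemma trancl_lt: "(B, B') \<in> AR\<^sup>+ \<Longrightarrow> B \<inter> X \<subset> B' \<inter> X"
proof (induction rule: trancl_induct)
  case (base y) thus ?case by (rule arc_lt)
next
  case (step y z) show ?case using step.IH arc_lt[OF step.hyps(2)] by (rule psubset_trans)
qed

end

lemma conn_rel_equiv: "equiv V (conn_rel V F)"
proof (rule equivI)
  show "conn_rel V F \<subseteq> V \<times> V" unfolding conn_rel_def by auto
next
  show "refl_on V (conn_rel V F)" unfolding refl_on_def conn_rel_def by auto
next
  show "sym (conn_rel V F)"
  proof (rule symI)
    fix a b assume "(a,b) \<in> conn_rel V F"
    hence ab: "a \<in> V" "b \<in> V" "(a,b) \<in> ((F \<inter> V \<times> V) \<union> (F \<inter> V \<times> V)\<inverse>)\<^sup>*" unfolding conn_rel_def by auto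
    have "(b,a) \<in> (((F \<inter> V \<times> V) \<union> (F \<inter> V \<times> V)\<inverse>)\<inverse>)\<^sup>*" using ab(3) by (rule rtrancl_converseI)
    also have "((F \<inter> V \<times> V) \<union> (F \<inter> V \<times> V)\<inverse>)\<inverse> = (F \<inter> V \<times> V) \<union> (F \<inter> V \<times> V)\<inverse>" by auto
    finally show "(b,a) \<in> conn_rel V F" using ab unfolding conn_rel_def by auto
  qed
next
  show "trans (conn_rel V F)"
    unfolding trans_def conn_rel_def by (auto intro: rtrancl_trans)
qed

lemma conn_rel_sub: "conn_rel V F \<subseteq> V \<times> V" unfolding conn_rel_def by auto

lemma conn_rel_F: "(a,b) \<in> F \<Longrightarrow> a \<in> V \<Longrightarrow> b \<in> V \<Longrightarrow> (a,b) \<in> conn_rel V F"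
  unfolding conn_rel_def by auto

lemma conn_rel_Finv: "(a,b) \<in> F \<Longrightarrow> a \<in> V \<Longrightarrow> b \<in> V \<Longrightarrow> (b,a) \<in> conn_rel V F"
  unfolding conn_rel_def by auto

lemma conn_rel_trans: "(a,b) \<in> conn_rel V F \<Longrightarrow> (b,c) \<in> conn_rel V F \<Longrightarrow> (a,c) \<in> conn_rel V F"
  using conn_rel_equiv[of V F] unfolding equiv_def trans_def by blast

lemma conn_rel_sym: "(a,b) \<in> conn_rel V F \<Longrightarrow> (b,a) \<in> conn_rel V F"
  using conn_rel_equiv[of V F] unfolding equiv_def sym_def by blast

lemma conn_rel_refl: "a \<in> V \<Longrightarrow> (a,a) \<in> conn_rel V F"
  unfolding conn_rel_def by auto

lemma conn_rel_trancl: assumes "(a,b) \<in> F\<^sup>+" "F \<subseteq> V \<times> V" shows "(a,b) \<in> conn_rel V F"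
  using assms(1)
proof (induction rule: trancl_induct)
  case (base y) thus ?case using assms(2) by (auto intro: conn_rel_F)
next
  case (step y z)
  have "(y,z) \<in> conn_rel V F" using step.hyps(2) assms(2) by (auto intro: conn_rel_F)
  thus ?case using step.IH by (rule conn_rel_trans[rotated])
qed

lemma conn_rel_invariant:
  assumes "(a,b) \<in> conn_rel V F" and "\<And>x y. (x,y) \<in> F \<Longrightarrow> x \<in> V \<Longrightarrow> y \<in> V \<Longrightarrow> g x = g y"
  shows "g a = g b"
proof -
  have "(a,b) \<in> ((F \<inter> V \<times> V) \<union> (F \<inter> V \<times> V)\<inverse>)\<^sup>*" using assms(1) unfolding conn_rel_def by auto
  thus ?thesis
  proof (induction rule: rtrancl_induct)
    case base thus ?case by simp
  next
    case (step y z) thus ?case using assms(2) by auto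
  qed
qed

lemma contr_lemma:
  fixes H1 :: "'b digraph" and H2 :: "'c digraph" and \<rho> :: "'c \<Rightarrow> 'b" and s :: "'b \<Rightarrow> 'c"
  assumes FA: "F \<subseteq> snd H2"
    and \<rho>P: "\<forall>p\<in>fst H2. \<rho> p \<in> fst H1"
    and sQ: "\<forall>q\<in>fst H1. s q \<in> fst H2 \<and> \<rho> (s q) = q"
    and F\<rho>: "\<forall>(a,b)\<in>F. \<rho> a = \<rho> b"
    and conn: "\<forall>p\<in>fst H2. (s (\<rho> p), p) \<in> conn_rel (fst H2) F"
    and arcs: "\<forall>q1\<in>fst H1. \<forall>q2\<in>fst H1. (q1,q2) \<in> snd H1 \<longleftrightarrow>
        q1 \<noteq> q2 \<and> (\<exists>a\<in>fst H2. \<exists>b\<in>fst H2. \<rho> a = q1 \<and> \<rho> b = q2 \<and> (a,b) \<in> snd H2)"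
  shows "iso_contraction H1 H2"
proof -
  define P where "P = fst H2"
  define Q where "Q = fst H1"
  define R where "R = conn_rel P F"
  have Riff: "(a,b) \<in> R \<longleftrightarrow> a \<in> P \<and> b \<in> P \<and> \<rho> a = \<rho> b" for a b
  proof
    assume ab: "(a,b) \<in> R"
    hence "a \<in> P \<and> b \<in> P" using conn_rel_sub unfolding R_def by blast
    moreover have "\<rho> a = \<rho> b" using ab unfolding R_def
      by (rule conn_rel_invariant) (use F\<rho> in auto)
    ultimately show "a \<in> P \<and> b \<in> P \<and> \<rho> a = \<rho> b" by blast
  next
    assume ab: "a \<in> P \<and> b \<in> P \<and> \<rho> a = \<rho> b"
    have 1: "(s (\<rho> a), a) \<in> R" using conn ab unfolding R_def P_def by blast
    have 2: "(s (\<rho> b), b) \<in> R" using conn ab unfolding R_def P_def by blast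
    have "(a, s (\<rho> a)) \<in> R" using 1 unfolding R_def by (rule conn_rel_sym)
    thus "(a,b) \<in> R" using 2 ab unfolding R_def by (metis conn_rel_trans)
  qed
  define \<phi> where "\<phi> q = {p\<in>P. \<rho> p = q}" for q
  have cls: "R `` {p} = \<phi> (\<rho> p)" if "p \<in> P" for p
    using that Riff unfolding \<phi>_def by auto
  have quot: "P // R = \<phi> ` Q"
  proof
    show "P // R \<subseteq> \<phi> ` Q"
    proof
      fix C assume "C \<in> P // R"
      then obtain p where p: "p \<in> P" "C = R `` {p}" unfolding quotient_def by blast
      thus "C \<in> \<phi> ` Q" using cls \<rho>P unfolding P_def Q_def by blast
    qed
  next
    show "\<phi> ` Q \<subseteq> P // R"
    proof
      fix C assume "C \<in> \<phi> ` Q"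
      then obtain q where q: "q \<in> Q" "C = \<phi> q" by blast
      hence "s q \<in> P" "\<rho> (s q) = q" using sQ unfolding P_def Q_def by auto
      hence "C = R `` {s q}" using cls q by auto
      thus "C \<in> P // R" using \<open>s q \<in> P\<close> unfolding quotient_def by blast
    qed
  qed
  have inj: "inj_on \<phi> Q"
  proof (rule inj_onI)
    fix q1 q2 assume q: "q1 \<in> Q" "q2 \<in> Q" "\<phi> q1 = \<phi> q2"
    have "s q1 \<in> \<phi> q1" using sQ q(1) unfolding \<phi>_def P_def Q_def by auto
    hence "s q1 \<in> \<phi> q2" using q(3) by simp
    thus "q1 = q2" using sQ q(1) unfolding \<phi>_def Q_def by auto
  qed
  have ne: "\<phi> q1 \<noteq> \<phi> q2 \<longleftrightarrow> q1 \<noteq> q2" if "q1 \<in> Q" "q2 \<in> Q" for q1 q2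
    using inj that unfolding inj_on_def by blast
  have "digraph_iso H1 (contract H2 F)"
    unfolding digraph_iso_def
  proof (intro exI conjI)
    show "bij_betw \<phi> (fst H1) (fst (contract H2 F))"
      unfolding bij_betw_def contract_def Let_def using inj quot unfolding P_def Q_def R_def by simp
    show "\<forall>u\<in>fst H1. \<forall>w\<in>fst H1. ((u, w) \<in> snd H1) = ((\<phi> u, \<phi> w) \<in> snd (contract H2 F))"
    proof (intro ballI)
      fix u w assume uw: "u \<in> fst H1" "w \<in> fst H1"
      have mem: "\<phi> u \<in> P // R" "\<phi> w \<in> P // R" using quot uw unfolding Q_def by auto
      have "(\<phi> u, \<phi> w) \<in> snd (contract H2 F) \<longleftrightarrow>
          \<phi> u \<noteq> \<phi> w \<and> (\<exists>a\<in>\<phi> u. \<exists>b\<in>\<phi> w. (a, b) \<in> snd H2)"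
        unfolding contract_def Let_def using mem unfolding P_def R_def by simp
      also have "\<dots> \<longleftrightarrow> u \<noteq> w \<and> (\<exists>a\<in>P. \<exists>b\<in>P. \<rho> a = u \<and> \<rho> b = w \<and> (a,b) \<in> snd H2)"
        using ne[of u w] uw unfolding Q_def \<phi>_def by blast
      also have "\<dots> \<longleftrightarrow> (u,w) \<in> snd H1" using arcs uw unfolding P_def by blast
      finally show "((u, w) \<in> snd H1) = ((\<phi> u, \<phi> w) \<in> snd (contract H2 F))" by simp
    qed
  qed
  thus ?thesis unfolding iso_contraction_def using FA by blast
qed

lemma card_quot_less:
  assumes finQ: "finite Q" and eQ: "equiv Q R'" and eP: "equiv P R"
    and fP: "\<forall>q\<in>Q. f q \<in> P"
    and fR: "\<forall>q q'. (q,q') \<in> R' \<longrightarrow> (f q, f q') \<in> R"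
    and sur: "\<forall>p\<in>P. \<exists>q\<in>Q. (f q, p) \<in> R"
    and q12: "q1 \<in> Q" "q2 \<in> Q" "(q1,q2) \<notin> R'" "(f q1, f q2) \<in> R"
  shows "card (P // R) < card (Q // R')"
proof -
  define \<phi> where "\<phi> C = R `` (f ` C)" for C
  have phi: "\<phi> (R' `` {q}) = R `` {f q}" if "q \<in> Q" for q
  proof
    show "\<phi> (R' `` {q}) \<subseteq> R `` {f q}"
    proof
      fix x assume "x \<in> \<phi> (R' `` {q})"
      then obtain q' where q': "(q,q') \<in> R'" "(f q', x) \<in> R" unfolding \<phi>_def by blast
      have "(f q, f q') \<in> R" using fR q'(1) by blast
      hence "(f q, x) \<in> R" using q'(2) eP unfolding equiv_def trans_def by blast
      thus "x \<in> R `` {f q}" by simp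
    qed
  next
    have "(q,q) \<in> R'" using eQ that unfolding equiv_def refl_on_def by blast
    thus "R `` {f q} \<subseteq> \<phi> (R' `` {q})" unfolding \<phi>_def by blast
  qed
  have img: "\<phi> ` (Q // R') = P // R"
  proof
    show "\<phi> ` (Q // R') \<subseteq> P // R"
    proof
      fix C assume "C \<in> \<phi> ` (Q // R')"
      then obtain q where q: "q \<in> Q" "C = \<phi> (R' `` {q})" unfolding quotient_def by blast
      thus "C \<in> P // R" using phi fP unfolding quotient_def by auto
    qed
  next
    show "P // R \<subseteq> \<phi> ` (Q // R')"
    proof
      fix C assume "C \<in> P // R"
      then obtain p where p: "p \<in> P" "C = R `` {p}" unfolding quotient_def by blast
      obtain q where q: "q \<in> Q" "(f q, p) \<in> R" using sur p by blast
      have "R `` {f q} = R `` {p}" using eP q(2) by (rule equiv_class_eq)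
      hence "C = \<phi> (R' `` {q})" using phi q p by simp
      thus "C \<in> \<phi> ` (Q // R')" using q unfolding quotient_def by blast
    qed
  qed
  have ninj: "\<not> inj_on \<phi> (Q // R')"
  proof
    assume inj: "inj_on \<phi> (Q // R')"
    have "R `` {f q1} = R `` {f q2}" using eP q12(4) by (rule equiv_class_eq)
    hence "\<phi> (R' `` {q1}) = \<phi> (R' `` {q2})" using phi q12 by simp
    moreover have "R' `` {q1} \<in> Q // R'" "R' `` {q2} \<in> Q // R'" using q12 unfolding quotient_def by auto
    ultimately have "R' `` {q1} = R' `` {q2}" using inj unfolding inj_on_def by blast
    hence "(q1,q2) \<in> R'" using eQ q12(2) by (metis eq_equiv_class_iff q12(1))
    thus False using q12(3) by blast
  qed
  have fq: "finite (Q // R')" using finQ eQ by (simp add: finite_quotient equiv_def)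
  have "card (\<phi> ` (Q // R')) \<le> card (Q // R')" using fq by (rule card_image_le)
  moreover have "card (\<phi> ` (Q // R')) \<noteq> card (Q // R')" using ninj fq inj_on_iff_eq_card by blast
  ultimately show ?thesis using img by simp
qed

context bip begin

lemma crossing:
  assumes ab: "(a,b) \<in> AR\<^sup>+"
  shows "(\<forall>c\<in>MB. a \<inter> X \<subseteq> c \<inter> X \<and> c \<inter> X \<subseteq> b \<inter> X \<longrightarrow> \<rho> c = q1 \<or> \<rho> c = q2) \<longrightarrow>
    \<rho> a = q1 \<longrightarrow> \<rho> b = q2 \<longrightarrow> q1 \<noteq> q2 \<longrightarrow> (\<exists>c d. (c,d) \<in> AR \<and> \<rho> c = q1 \<and> \<rho> d = q2)"
  using ab
proof (induction rule: converse_trancl_induct)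
  case (base y) thus ?case by blast
next
  case (step y z)
  show ?case
  proof (intro impI)
    assume H: "\<forall>c\<in>MB. y \<inter> X \<subseteq> c \<inter> X \<and> c \<inter> X \<subseteq> b \<inter> X \<longrightarrow> \<rho> c = q1 \<or> \<rho> c = q2"
      and y1: "\<rho> y = q1" and b2: "\<rho> b = q2" and ne: "q1 \<noteq> q2"
    have yz: "y \<inter> X \<subset> z \<inter> X" using step.hyps(1) by (rule arc_lt)
    have zb: "z \<inter> X \<subset> b \<inter> X" using step.hyps(2) by (rule trancl_lt)
    have zM: "z \<in> MB" using arc_mb[OF step.hyps(1)] by blast
    have "\<rho> z = q1 \<or> \<rho> z = q2" using H zM yz zb by blast
    thus "\<exists>c d. (c,d) \<in> AR \<and> \<rho> c = q1 \<and> \<rho> d = q2"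
    proof
      assume "\<rho> z = q2" thus ?thesis using step.hyps(1) y1 by blast
    next
      assume z1: "\<rho> z = q1"
      have "\<forall>c\<in>MB. z \<inter> X \<subseteq> c \<inter> X \<and> c \<inter> X \<subseteq> b \<inter> X \<longrightarrow> \<rho> c = q1 \<or> \<rho> c = q2"
        using H yz by blast
      thus ?thesis using step.IH z1 b2 ne by blast
    qed
  qed
qed

lemma lt_conn: assumes "B \<in> MB" "B' \<in> MB" "B \<inter> X \<subseteq> B' \<inter> X" shows "(B, B') \<in> conn_rel MB AR"
proof (cases "B \<inter> X = B' \<inter> X")
  case True thus ?thesis using mb_eq assms conn_rel_refl by metis
next
  case False
  hence "(B,B') \<in> AR\<^sup>+" using assms lt_trancl by blast
  thus ?thesis using AR_sub by (rule conn_rel_trancl)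
qed

end

definition adjrel :: "('a\<times>'a) set \<Rightarrow> 'a set \<Rightarrow> ('a\<times>'a) set" where
  "adjrel E S = {(x,y). x \<in> S \<and> y \<in> S \<and> adj E x y}"

lemma adj_sym: "adj E a b \<longleftrightarrow> adj E b a" unfolding adj_def by auto

lemma adjrel_sym: "(a,b) \<in> (adjrel E S)\<^sup>* \<Longrightarrow> (b,a) \<in> (adjrel E S)\<^sup>*"
proof -
  assume "(a,b) \<in> (adjrel E S)\<^sup>*"
  hence "(b,a) \<in> ((adjrel E S)\<inverse>)\<^sup>*" by (rule rtrancl_converseI)
  moreover have "(adjrel E S)\<inverse> = adjrel E S" unfolding adjrel_def using adj_sym by fastforce
  ultimately show ?thesis by simp
qed

lemma rtrancl_walk:
  assumes "(a,b) \<in> (adjrel E S)\<^sup>*" "a \<in> S"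
  shows "\<exists>p. is_walk_in E S p \<and> hd p = a \<and> last p = b"
  using assms(1)
proof (induction rule: rtrancl_induct)
  case base
  have "is_walk_in E S [a]" using assms(2) unfolding is_walk_in_def by simp
  thus ?case by force
next
  case (step y z)
  then obtain p where p: "is_walk_in E S p" "hd p = a" "last p = y" by blast
  have yz: "y \<in> S" "z \<in> S" "adj E y z" using step.hyps(2) unfolding adjrel_def by auto
  have pne: "p \<noteq> []" using p(1) unfolding is_walk_in_def by simp
  have "is_walk_in E S (p @ [z])"
    unfolding is_walk_in_def
  proof (intro conjI allI impI)
    show "p @ [z] \<noteq> []" by simp
    show "set (p @ [z]) \<subseteq> S" using p(1) yz unfolding is_walk_in_def by auto
    fix i assume i: "Suc i < length (p @ [z])"
    show "adj E ((p @ [z]) ! i) ((p @ [z]) ! Suc i)"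
    proof (cases "Suc i < length p")
      case True
      thus ?thesis using p(1) unfolding is_walk_in_def by (simp add: nth_append)
    next
      case False
      hence ii: "Suc i = length p" using i by simp
      hence "i = length p - 1" by simp
      hence "(p @ [z]) ! i = last p" using pne by (simp add: nth_append last_conv_nth)
      moreover have "(p @ [z]) ! Suc i = z" using ii by (simp add: nth_append)
      ultimately show ?thesis using yz p(3) by simp
    qed
  qed
  moreover have "hd (p @ [z]) = a" using pne p(2) by simp
  moreover have "last (p @ [z]) = z" by simp
  ultimately show ?case by blast
qed

lemma connected_from_rel:
  assumes "\<forall>a\<in>S. \<forall>b\<in>S. (a,b) \<in> (adjrel E S)\<^sup>*" shows "connected_in E S"
  unfolding connected_in_def using assms rtrancl_walk by metis

lemma component_connected:
  assumes "u \<in> T"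
  shows "connected_in E {x. (u,x) \<in> (adjrel E T)\<^sup>*}" (is "connected_in E ?S")
proof (rule connected_from_rel)
  have stay: "(a,b) \<in> (adjrel E T)\<^sup>* \<Longrightarrow> a \<in> ?S \<Longrightarrow> b \<in> ?S \<and> (a,b) \<in> (adjrel E ?S)\<^sup>*" for a b
  proof (induction rule: rtrancl_induct)
    case base thus ?case by simp
  next
    case (step y z)
    hence y: "y \<in> ?S" "(a,y) \<in> (adjrel E ?S)\<^sup>*" by auto
    have z: "z \<in> ?S" using y(1) step.hyps(2) by (auto intro: rtrancl_into_rtrancl)
    have "(y,z) \<in> adjrel E ?S" using y(1) z step.hyps(2) unfolding adjrel_def by auto
    thus ?case using y z by (auto intro: rtrancl_into_rtrancl)
  qed
  show "\<forall>a\<in>?S. \<forall>b\<in>?S. (a,b) \<in> (adjrel E ?S)\<^sup>*"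
  proof (intro ballI)
    fix a b assume a: "a \<in> ?S" and b: "b \<in> ?S"
    have uS: "u \<in> ?S" by simp
    have "(a,u) \<in> (adjrel E T)\<^sup>*" using a adjrel_sym by auto
    hence "(a,u) \<in> (adjrel E ?S)\<^sup>*" using stay a by blast
    moreover have "(u,b) \<in> (adjrel E ?S)\<^sup>*" using stay[of u b] uS b by auto
    ultimately show "(a,b) \<in> (adjrel E ?S)\<^sup>*" by (rule rtrancl_trans)
  qed
qed

lemma dh2:
  assumes DH: "distance_hereditary V E" and SV: "S \<subseteq> V" and con: "connected_in E S"
    and u: "u \<in> S" and w: "w \<in> S" and z: "z \<in> V" and uz: "adj E u z" and zw: "adj E z w"
  shows "u = w \<or> adj E u w \<or> (\<exists>x\<in>S. adj E u x \<and> adj E x w)"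
proof -
  let ?M = "\<lambda>T. {enat (length p - 1) | p. is_walk_in E T p \<and> hd p = u \<and> last p = w}"
  have wV: "is_walk_in E V [u,z,w]" unfolding is_walk_in_def using u w SV z uz zw
    by (auto simp: less_Suc_eq nth_Cons')
  have "enat (length [u,z,w] - 1) \<in> ?M V"
    by (rule CollectI, rule exI[of _ "[u,z,w]"]) (use wV in simp)
  hence "gdist E V u w \<le> enat (length [u,z,w] - 1)" unfolding gdist_def by (rule Inf_lower)
  hence "gdist E V u w \<le> enat 2" by (simp add: numeral_2_eq_2)
  moreover have "gdist E S u w = gdist E V u w" using DH SV con u w unfolding distance_hereditary_def by blast
  ultimately have le: "gdist E S u w \<le> enat 2" by simp
  have ne: "?M S \<noteq> {}" using con u w unfolding connected_in_def by blast
  have "gdist E S u w = (LEAST x. x \<in> ?M S)" unfolding gdist_def Inf_enat_def by (rule if_not_P[OF ne])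
  moreover obtain m where "m \<in> ?M S" using ne by blast
  hence "(LEAST x. x \<in> ?M S) \<in> ?M S" by (rule LeastI)
  ultimately have "gdist E S u w \<in> ?M S" by simp
  then obtain p where p0: "gdist E S u w = enat (length p - 1)" and p: "is_walk_in E S p" "hd p = u" "last p = w"
    by blast
  have p4: "enat (length p - 1) \<le> enat 2" using le p0 by simp
  have pne: "p \<noteq> []" using p(1) unfolding is_walk_in_def by simp
  have len: "length p - 1 \<le> 2" using p4 by simp
  have pS: "set p \<subseteq> S" and padj: "\<And>i. Suc i < length p \<Longrightarrow> adj E (p!i) (p!Suc i)"
    using p(1) unfolding is_walk_in_def by auto
  have "length p \<ge> 1" using pne by (cases p) auto
  hence "length p = 1 \<or> length p = 2 \<or> length p = 3" using len by linarith
  then consider "length p = 1" | "length p = 2" | "length p = 3" by blast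
  thus ?thesis
  proof cases
    case 1
    then obtain a where "p = [a]" by (auto simp: length_Suc_conv)
    thus ?thesis using p by simp
  next
    case 2
    then obtain a b where ab: "p = [a,b]" by (auto simp: length_Suc_conv numeral_2_eq_2)
    have "adj E (p!0) (p!1)" using padj[of 0] 2 by simp
    thus ?thesis using ab p by simp
  next
    case 3
    then obtain a b c where ab: "p = [a,b,c]" by (auto simp: length_Suc_conv numeral_3_eq_3)
    have "adj E a b" using padj[of 0] ab by simp
    moreover have "adj E b c" using padj[of 1] ab by simp
    moreover have "b \<in> S" using pS ab by simp
    ultimately show ?thesis using ab p(2,3) by auto
  qed
qed

lemma dh_component:
  assumes DH: "distance_hereditary V E" and TV: "T \<subseteq> V" and u: "u \<in> T"
    and uw: "(u,w) \<in> (adjrel E T)\<^sup>*" and z: "z \<in> V" and uz: "adj E u z" and zw: "adj E z w"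
  shows "u = w \<or> adj E u w \<or> (\<exists>x\<in>T. adj E u x \<and> adj E x w)"
proof -
  let ?S = "{x. (u,x) \<in> (adjrel E T)\<^sup>*}"
  have ST: "?S \<subseteq> T"
  proof
    fix x assume "x \<in> ?S"
    hence "(u,x) \<in> (adjrel E T)\<^sup>*" by simp
    thus "x \<in> T" using u by (induction rule: rtrancl_induct) (auto simp: adjrel_def)
  qed
  have "u = w \<or> adj E u w \<or> (\<exists>x\<in>?S. adj E u x \<and> adj E x w)"
    by (rule dh2[OF DH _ component_connected[OF u]]) (use ST TV uw z uz zw in auto)
  thus ?thesis using ST by blast
qed

lemma p5:
  assumes DH: "distance_hereditary V E"
    and V: "p0 \<in> V" "p1 \<in> V" "p2 \<in> V" "p3 \<in> V" "p4 \<in> V" "z \<in> V"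
    and a: "adj E p0 p1" "adj E p1 p2" "adj E p2 p3" "adj E p3 p4" "adj E p0 z" "adj E z p4"
  shows "p0 = p4 \<or> adj E p0 p4 \<or> (\<exists>x\<in>{p0,p1,p2,p3,p4}. adj E p0 x \<and> adj E x p4)"
proof -
  let ?S = "{p0,p1,p2,p3,p4}"
  let ?R = "adjrel E ?S"
  have r: "(p0,p1) \<in> ?R" "(p1,p2) \<in> ?R" "(p2,p3) \<in> ?R" "(p3,p4) \<in> ?R"
    using a unfolding adjrel_def by auto
  have f: "(p0,x) \<in> ?R\<^sup>*" if "x \<in> ?S" for x
  proof -
    have s1: "(p0,p1) \<in> ?R\<^sup>*" using r(1) by (rule r_into_rtrancl)
    have s2: "(p0,p2) \<in> ?R\<^sup>*" using s1 r(2) by (rule rtrancl_into_rtrancl)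
    have s3: "(p0,p3) \<in> ?R\<^sup>*" using s2 r(3) by (rule rtrancl_into_rtrancl)
    have s4: "(p0,p4) \<in> ?R\<^sup>*" using s3 r(4) by (rule rtrancl_into_rtrancl)
    have s0: "(p0,p0) \<in> ?R\<^sup>*" by simp
    from that show ?thesis using s0 s1 s2 s3 s4 by (elim insertE) auto
  qed
  have con: "connected_in E ?S"
  proof (rule connected_from_rel, intro ballI)
    fix x y assume xy: "x \<in> ?S" "y \<in> ?S"
    have "(p0,x) \<in> ?R\<^sup>*" using xy(1) by (rule f)
    hence "(x,p0) \<in> ?R\<^sup>*" by (rule adjrel_sym)
    moreover have "(p0,y) \<in> ?R\<^sup>*" using xy(2) by (rule f)
    ultimately show "(x,y) \<in> ?R\<^sup>*" by (rule rtrancl_trans)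
  qed
  have sub: "?S \<subseteq> V" using V by blast
  show ?thesis by (rule dh2[OF DH sub con, of p0 p4 z]) (use V a in simp_all)
qed

context bip begin

lemma E_XY: "(a,b) \<in> E \<Longrightarrow> a \<in> X \<and> b \<in> Y" using EXY by auto

lemma adj_XY: "x \<in> X \<Longrightarrow> adj E x y \<longleftrightarrow> (x,y) \<in> E"
  unfolding adj_def using E_XY disj by blast
lemma adj_YX: "x \<in> X \<Longrightarrow> adj E y x \<longleftrightarrow> (x,y) \<in> E"
  unfolding adj_def using E_XY disj by blast
lemma adj_XX: "a \<in> X \<Longrightarrow> b \<in> X \<Longrightarrow> \<not> adj E a b"
  unfolding adj_def using E_XY disj by blast
lemma adj_YY: "a \<in> Y \<Longrightarrow> b \<in> Y \<Longrightarrow> \<not> adj E a b"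
  unfolding adj_def using E_XY disj by blast

lemma mb_edge: "B \<in> MB \<Longrightarrow> x \<in> B \<inter> X \<Longrightarrow> y \<in> B \<inter> Y \<Longrightarrow> (x,y) \<in> E"
  using mb_int[of B] unfolding up_def by blast

lemma mb_nonedge: assumes "B \<in> MB" "x \<in> X" "x \<notin> B" shows "\<exists>y\<in>B \<inter> Y. (x,y) \<notin> E"
proof (rule ccontr)
  assume "\<not> ?thesis"
  hence "x \<in> D (B \<inter> Y)" using assms(2) unfolding dn_def by blast
  thus False using mb_ext[OF assms(1)] assms(3) by blast
qed

end

locale vx = bip +
  fixes v
  assumes vX: "v \<in> X"
begin

lemma vY: "v \<notin> Y" using vX disj by blast

lemma bg': "bipartite_graph (X - {v}) Y (del_edges E v)"
  using finX finY disj EXY unfolding bipartite_graph_def del_edges_def by auto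

sublocale G': bip "X - {v}" Y "del_edges E v" by (rule bip.intro, rule bg')

lemma U'_eq: "v \<notin> A \<Longrightarrow> up Y (del_edges E v) A = U A"
  unfolding up_def del_edges_def using vY by auto

lemma D'_eq: "B \<subseteq> Y \<Longrightarrow> dn (X - {v}) (del_edges E v) B = D B - {v}"
  unfolding dn_def del_edges_def using vY by auto

lemma gm_v: "q \<in> G'.MB \<Longrightarrow> v \<notin> q" using G'.mb_V vY by blast
lemma gm_X: "q \<in> G'.MB \<Longrightarrow> q \<inter> (X - {v}) = q \<inter> X" using gm_v by blast
lemma gm_Xne: "q \<in> G'.MB \<Longrightarrow> q \<inter> X \<noteq> {}" using G'.mb_Xne gm_X by metis
lemma gm_Yne: "q \<in> G'.MB \<Longrightarrow> q \<inter> Y \<noteq> {}" using G'.mb_Yne by metis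
lemma gm_int: assumes "q \<in> G'.MB" shows "q \<inter> Y = U (q \<inter> X)"
proof -
  have "q \<inter> Y = up Y (del_edges E v) (q \<inter> (X - {v}))" by (rule G'.mb_int[OF assms])
  also have "\<dots> = U (q \<inter> X)" using gm_X[OF assms] U'_eq[of "q \<inter> X"] gm_v[OF assms] by simp
  finally show ?thesis .
qed
lemma gm_ext: assumes "q \<in> G'.MB" shows "q \<inter> X = D (q \<inter> Y) - {v}"
proof -
  have "q \<inter> X = q \<inter> (X - {v})" using gm_X[OF assms] by simp
  also have "\<dots> = dn (X - {v}) (del_edges E v) (q \<inter> Y)" by (rule G'.mb_ext[OF assms])
  also have "\<dots> = D (q \<inter> Y) - {v}" by (rule D'_eq) blast
  finally show ?thesis .
qed
lemma gm_eq: "q \<in> G'.MB \<Longrightarrow> q' \<in> G'.MB \<Longrightarrow> q \<inter> X = q' \<inter> X \<Longrightarrow> q = q'"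
  using G'.mb_eq gm_X by metis
lemma gm_edge: "q \<in> G'.MB \<Longrightarrow> x \<in> q \<inter> X \<Longrightarrow> y \<in> q \<inter> Y \<Longrightarrow> (x,y) \<in> E"
  using gm_int[of q] unfolding up_def by blast
lemma gm_V: "q \<in> G'.MB \<Longrightarrow> q \<subseteq> X \<union> Y" using G'.mb_V by blast

lemma garc_iff: "(q1, q2) \<in> G'.AR \<longleftrightarrow> q1 \<in> G'.MB \<and> q2 \<in> G'.MB \<and> q1 \<inter> X \<subset> q2 \<inter> X \<and>
   \<not> (\<exists>c\<in>G'.MB. q1 \<inter> X \<subset> c \<inter> X \<and> c \<inter> X \<subset> q2 \<inter> X)"
proof -
  have "(q1, q2) \<in> G'.AR \<longleftrightarrow> q1 \<in> G'.MB \<and> q2 \<in> G'.MB \<and> q1 \<inter> (X - {v}) \<subset> q2 \<inter> (X - {v}) \<and>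
   \<not> (\<exists>c\<in>G'.MB. q1 \<inter> (X - {v}) \<subset> c \<inter> (X - {v}) \<and> c \<inter> (X - {v}) \<subset> q2 \<inter> (X - {v}))"
    by (rule G'.arc_iff)
  also have "\<dots> \<longleftrightarrow> q1 \<in> G'.MB \<and> q2 \<in> G'.MB \<and> q1 \<inter> X \<subset> q2 \<inter> X \<and>
   \<not> (\<exists>c\<in>G'.MB. q1 \<inter> X \<subset> c \<inter> X \<and> c \<inter> X \<subset> q2 \<inter> X)"
    using gm_X by (smt (verit, best))
  finally show ?thesis .
qed

lemma gm_mem: assumes "q \<subseteq> X \<union> Y" "v \<notin> q" "q \<inter> X \<noteq> {}" "q \<inter> Y \<noteq> {}" "q \<inter> Y = U (q \<inter> X)"
  "q \<inter> X = D (q \<inter> Y) - {v}" shows "q \<in> G'.MB"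
proof -
  have qX: "q \<inter> (X - {v}) = q \<inter> X" using assms(2) by blast
  show ?thesis unfolding G'.mb_iff qX
  proof (intro conjI)
    show "q \<subseteq> X - {v} \<union> Y" using assms(1,2) by blast
    show "q \<inter> X \<noteq> {}" "q \<inter> Y \<noteq> {}" by fact+
    show "q \<inter> Y = up Y (del_edges E v) (q \<inter> X)" using assms(2,5) U'_eq by simp
    show "q \<inter> X = dn (X - {v}) (del_edges E v) (q \<inter> Y)" using assms(6) D'_eq[of "q \<inter> Y"] by simp
  qed
qed

definition fm :: "'a set \<Rightarrow> 'a set" where "fm q = D (q \<inter> Y) \<union> (q \<inter> Y)"
definition pm :: "'a set \<Rightarrow> 'a set" where "pm p = (p \<inter> X - {v}) \<union> U (p \<inter> X - {v})"

lemma fm_X: "fm q \<inter> X = D (q \<inter> Y)" unfolding fm_def using D_sub disj by blast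
lemma fm_Y: "fm q \<inter> Y = q \<inter> Y" unfolding fm_def using D_sub disj by blast

lemma fm_mb: assumes q: "q \<in> G'.MB" shows "fm q \<in> MB" "fm q \<inter> X - {v} = q \<inter> X"
  "q \<inter> X \<subseteq> fm q \<inter> X"
proof -
  show 1: "fm q \<inter> X - {v} = q \<inter> X" using fm_X gm_ext[OF q] by simp
  show 2: "q \<inter> X \<subseteq> fm q \<inter> X" using 1 by blast
  have "fm q \<subseteq> X \<union> Y" unfolding fm_def using D_sub by blast
  moreover have "fm q \<inter> X \<noteq> {}" using 2 gm_Xne[OF q] by blast
  moreover have "fm q \<inter> Y \<noteq> {}" using fm_Y gm_Yne[OF q] by simp
  moreover have "fm q \<inter> Y = U (fm q \<inter> X)"
  proof -
    have "U (fm q \<inter> X) = U (D (U (q \<inter> X)))" using fm_X gm_int[OF q] by simp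
    also have "\<dots> = U (q \<inter> X)" by (rule UDU) blast
    also have "\<dots> = fm q \<inter> Y" using fm_Y gm_int[OF q] by simp
    finally show ?thesis by simp
  qed
  moreover have "fm q \<inter> X = D (fm q \<inter> Y)" using fm_X fm_Y by simp
  ultimately show "fm q \<in> MB" unfolding mb_iff by blast
qed

lemma fm_le: assumes q: "q1 \<in> G'.MB" "q2 \<in> G'.MB"
  shows "fm q1 \<inter> X \<subseteq> fm q2 \<inter> X \<longleftrightarrow> q1 \<inter> X \<subseteq> q2 \<inter> X"
proof
  assume "fm q1 \<inter> X \<subseteq> fm q2 \<inter> X"
  hence "fm q1 \<inter> X - {v} \<subseteq> fm q2 \<inter> X - {v}" by blast
  thus "q1 \<inter> X \<subseteq> q2 \<inter> X" using fm_mb(2)[OF q(1)] fm_mb(2)[OF q(2)] by simp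
next
  assume "q1 \<inter> X \<subseteq> q2 \<inter> X"
  hence "U (q2 \<inter> X) \<subseteq> U (q1 \<inter> X)" by (rule U_anti)
  hence "q2 \<inter> Y \<subseteq> q1 \<inter> Y" using gm_int[OF q(1)] gm_int[OF q(2)] by simp
  hence "D (q1 \<inter> Y) \<subseteq> D (q2 \<inter> Y)" by (rule D_anti)
  thus "fm q1 \<inter> X \<subseteq> fm q2 \<inter> X" using fm_X by simp
qed

lemma fm_lt: assumes q: "q1 \<in> G'.MB" "q2 \<in> G'.MB"
  shows "fm q1 \<inter> X \<subset> fm q2 \<inter> X \<longleftrightarrow> q1 \<inter> X \<subset> q2 \<inter> X"
  using fm_le[OF q] fm_le[OF q(2,1)] unfolding psubset_eq by blast

lemma fm_inj: "inj_on fm G'.MB"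
proof (rule inj_onI)
  fix q1 q2 assume q: "q1 \<in> G'.MB" "q2 \<in> G'.MB" "fm q1 = fm q2"
  hence "q1 \<inter> X = q2 \<inter> X" using fm_le[OF q(1,2)] fm_le[OF q(2,1)] by blast
  thus "q1 = q2" using gm_eq q by blast
qed

lemma pm_mb: assumes p: "p \<in> MB" "p \<inter> X \<noteq> {v}"
  shows "pm p \<in> G'.MB" "pm p \<inter> X = p \<inter> X - {v}" "pm p \<inter> Y = U (p \<inter> X - {v})" "p \<inter> Y \<subseteq> pm p \<inter> Y"
proof -
  let ?A = "p \<inter> X - {v}"
  show x: "pm p \<inter> X = ?A" unfolding pm_def using U_sub disj by blast
  show y: "pm p \<inter> Y = U ?A" unfolding pm_def using U_sub disj by blast
  have Ane: "?A \<noteq> {}" using mb_Xne[OF p(1)] p(2) by blast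
  have "U (p \<inter> X) \<subseteq> U ?A" by (rule U_anti) blast
  thus yy: "p \<inter> Y \<subseteq> pm p \<inter> Y" using y mb_int[OF p(1)] by simp
  have DA: "D (U ?A) - {v} = ?A"
  proof -
    have "D (U ?A) \<subseteq> p \<inter> X" by (rule cl_le[OF p(1)]) blast
    moreover have "?A \<subseteq> D (U ?A)" by (rule DU) blast
    ultimately show ?thesis by blast
  qed
  show "pm p \<in> G'.MB"
  proof (rule gm_mem)
    show "pm p \<subseteq> X \<union> Y" unfolding pm_def using U_sub by blast
    show "v \<notin> pm p" unfolding pm_def using U_sub vY by blast
    show "pm p \<inter> X \<noteq> {}" using x Ane by simp
    show "pm p \<inter> Y \<noteq> {}" using yy mb_Yne[OF p(1)] by blast
    show "pm p \<inter> Y = U (pm p \<inter> X)" using x y by simp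
    show "pm p \<inter> X = D (pm p \<inter> Y) - {v}" using x y DA by simp
  qed
qed

lemma fm_neq_v: "q \<in> G'.MB \<Longrightarrow> fm q \<inter> X \<noteq> {v}"
  using fm_mb(2)[of q] gm_Xne[of q] by auto

lemma pm_fm: assumes q: "q \<in> G'.MB" shows "pm (fm q) = q"
proof -
  have "pm (fm q) \<inter> X = q \<inter> X" using pm_mb(2)[OF fm_mb(1)[OF q] fm_neq_v[OF q]] fm_mb(2)[OF q] by simp
  thus ?thesis using gm_eq[OF pm_mb(1)[OF fm_mb(1)[OF q] fm_neq_v[OF q]] q] by blast
qed

lemma fm_pm_X: assumes p: "p \<in> MB" "p \<inter> X \<noteq> {v}"
  shows "fm (pm p) \<inter> X - {v} = p \<inter> X - {v}" "fm (pm p) \<inter> X \<subseteq> p \<inter> X"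
proof -
  have q: "pm p \<in> G'.MB" by (rule pm_mb(1)[OF p])
  show "fm (pm p) \<inter> X - {v} = p \<inter> X - {v}" using fm_mb(2)[OF q] pm_mb(2)[OF p] by simp
  have "fm (pm p) \<inter> X = D (U (p \<inter> X - {v}))" using fm_X pm_mb(3)[OF p] by simp
  also have "\<dots> \<subseteq> p \<inter> X" by (rule cl_le[OF p(1)]) blast
  finally show "fm (pm p) \<inter> X \<subseteq> p \<inter> X" .
qed

lemma lost: assumes p: "p \<in> MB" "p \<inter> X \<noteq> {v}" "p \<notin> fm ` G'.MB"
  shows "v \<in> p" "fm (pm p) \<inter> X = p \<inter> X - {v}" "(fm (pm p), p) \<in> AR"
proof -
  have q: "pm p \<in> G'.MB" by (rule pm_mb(1)[OF p(1,2)])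
  have m: "fm (pm p) \<in> MB" by (rule fm_mb(1)[OF q])
  have ne: "fm (pm p) \<noteq> p" using p(3) q by blast
  have 1: "fm (pm p) \<inter> X - {v} = p \<inter> X - {v}" "fm (pm p) \<inter> X \<subseteq> p \<inter> X" by (rule fm_pm_X[OF p(1,2)])+
  have "fm (pm p) \<inter> X \<noteq> p \<inter> X" using ne mb_eq[OF m p(1)] by blast
  hence 2: "v \<in> p \<inter> X" "v \<notin> fm (pm p) \<inter> X" using 1 by blast+
  thus "v \<in> p" by blast
  show 3: "fm (pm p) \<inter> X = p \<inter> X - {v}" using 1 2 by blast
  show "(fm (pm p), p) \<in> AR" unfolding arc_iff
  proof (intro conjI)
    show "fm (pm p) \<in> MB" "p \<in> MB" by fact+
    show "fm (pm p) \<inter> X \<subset> p \<inter> X" using 3 2 by blast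
    show "\<not> (\<exists>C\<in>MB. fm (pm p) \<inter> X \<subset> C \<inter> X \<and> C \<inter> X \<subset> p \<inter> X)" using 3 by blast
  qed
qed

end

context vx begin

lemma arc_back:
  assumes DH: "distance_hereditary (X \<union> Y) E" and ab: "(a,b) \<in> AR" and av: "a \<inter> X \<noteq> {v}"
    and ne: "pm a \<noteq> pm b"
  shows "(pm a, pm b) \<in> G'.AR"
proof -
  have a: "a \<in> MB" and b: "b \<in> MB" and lt: "a \<inter> X \<subset> b \<inter> X"
    and nob: "\<not> (\<exists>C\<in>MB. a \<inter> X \<subset> C \<inter> X \<and> C \<inter> X \<subset> b \<inter> X)"
    using ab unfolding arc_iff by blast+
  have bv: "b \<inter> X \<noteq> {v}"
  proof
    assume "b \<inter> X = {v}"
    hence "a \<inter> X = {}" using lt by (metis psubset_eq subset_singletonD)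
    thus False using mb_Xne[OF a] by simp
  qed
  have qa: "pm a \<in> G'.MB" "pm a \<inter> X = a \<inter> X - {v}" using pm_mb[OF a av] by blast+
  have qb: "pm b \<in> G'.MB" "pm b \<inter> X = b \<inter> X - {v}" "pm b \<inter> Y = U (b \<inter> X - {v})"
    using pm_mb[OF b bv] by blast+
  have le: "pm a \<inter> X \<subseteq> pm b \<inter> X" using qa(2) qb(2) lt by blast
  have neq: "pm a \<inter> X \<noteq> pm b \<inter> X" using gm_eq[OF qa(1) qb(1)] ne by blast
  show ?thesis unfolding garc_iff
  proof (intro conjI)
    show "pm a \<in> G'.MB" "pm b \<in> G'.MB" by fact+
    show "pm a \<inter> X \<subset> pm b \<inter> X" using le neq by blast
    show "\<not> (\<exists>c\<in>G'.MB. pm a \<inter> X \<subset> c \<inter> X \<and> c \<inter> X \<subset> pm b \<inter> X)"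
    proof
      assume "\<exists>c\<in>G'.MB. pm a \<inter> X \<subset> c \<inter> X \<and> c \<inter> X \<subset> pm b \<inter> X"
      then obtain q3 where q3: "q3 \<in> G'.MB" "pm a \<inter> X \<subset> q3 \<inter> X" "q3 \<inter> X \<subset> pm b \<inter> X" by blast
      have f3: "fm q3 \<in> MB" "fm q3 \<inter> X - {v} = q3 \<inter> X" "q3 \<inter> X \<subseteq> fm q3 \<inter> X" using fm_mb[OF q3(1)] by blast+
      have f3b: "fm q3 \<inter> X \<subseteq> b \<inter> X"
      proof -
        have "U (b \<inter> X) \<subseteq> U (b \<inter> X - {v})" by (rule U_anti) blast
        also have "\<dots> = U (pm b \<inter> X)" using qb(2) by simp
        also have "\<dots> \<subseteq> U (q3 \<inter> X)" by (rule U_anti) (use q3(3) in blast)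
        also have "\<dots> = q3 \<inter> Y" using gm_int[OF q3(1)] by simp
        finally have "b \<inter> Y \<subseteq> q3 \<inter> Y" using mb_int[OF b] by simp
        hence "D (q3 \<inter> Y) \<subseteq> D (b \<inter> Y)" by (rule D_anti)
        thus ?thesis using fm_X mb_ext[OF b] by simp
      qed
      have f3nb: "fm q3 \<inter> X \<noteq> b \<inter> X" using f3(2) qb(2) q3(3) by blast
      obtain x where x: "x \<in> q3 \<inter> X" "x \<notin> pm a \<inter> X" using q3(2) by blast
      have xv: "x \<noteq> v" using gm_v[OF q3(1)] x(1) by blast
      have xa: "x \<notin> a" using x qa(2) xv by blast
      show False
      proof (cases "v \<in> a")
        case False
        hence "a \<inter> X = pm a \<inter> X" using qa(2) by blast
        hence "a \<inter> X \<subset> fm q3 \<inter> X" using q3(2) f3(3) by blast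
        thus False using nob f3(1) f3b f3nb by blast
      next
        case True
        have vD: "v \<notin> D (q3 \<inter> Y)"
        proof
          assume "v \<in> D (q3 \<inter> Y)"
          hence "v \<in> fm q3 \<inter> X" using fm_X by simp
          hence "a \<inter> X \<subseteq> fm q3 \<inter> X" using qa(2) q3(2) f3(3) by blast
          moreover have "x \<in> fm q3 \<inter> X" using x(1) f3(3) by blast
          ultimately have "a \<inter> X \<subset> fm q3 \<inter> X" using xa by blast
          thus False using nob f3(1) f3b f3nb by blast
        qed
        obtain y3 where y3: "y3 \<in> q3 \<inter> Y" "(v,y3) \<notin> E" using vD vX unfolding dn_def by blast
        obtain y1 where y1: "y1 \<in> a \<inter> Y" "(x,y1) \<notin> E" using mb_nonedge[OF a] x(1) xa by blast
        obtain aa where aa: "aa \<in> a \<inter> X" "aa \<noteq> v" using av mb_Xne[OF a] by blast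
        obtain b0 where b0: "b0 \<in> b \<inter> Y" using mb_Yne[OF b] by blast
        have vb: "v \<in> b \<inter> X" using True vX lt by blast
        have e1: "(v,y1) \<in> E" using mb_edge[OF a] True vX y1(1) by blast
        have e2: "(aa,y1) \<in> E" using mb_edge[OF a] aa(1) y1(1) by blast
        have aq3: "aa \<in> q3 \<inter> X" using aa qa(2) q3(2) by blast
        have e3: "(aa,y3) \<in> E" using gm_edge[OF q3(1)] aq3 y3(1) by blast
        have e4: "(x,y3) \<in> E" using gm_edge[OF q3(1)] x(1) y3(1) by blast
        have e5: "(v,b0) \<in> E" using mb_edge[OF b] vb b0 by blast
        have xb: "x \<in> b \<inter> X" using x(1) q3(3) qb(2) by blast
        have e6: "(x,b0) \<in> E" using mb_edge[OF b] xb b0 by blast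
        have XY: "v \<in> X" "x \<in> X" "aa \<in> X" "y1 \<in> Y" "y3 \<in> Y" "b0 \<in> Y"
          using vX x(1) aa(1) y1(1) y3(1) b0 by blast+
        have "v = x \<or> adj E v x \<or> (\<exists>w\<in>{v,y1,aa,y3,x}. adj E v w \<and> adj E w x)"
          by (rule p5[OF DH, of v y1 aa y3 x b0]) (use XY e1 e2 e3 e4 e5 e6 in \<open>simp_all add: adj_XY adj_YX\<close>)
        moreover have "\<not> adj E v x" using adj_XX XY by blast
        moreover have "\<not> (adj E v w \<and> adj E w x)" if "w \<in> {v,y1,aa,y3,x}" for w
          using that XY y1(2) y3(2) adj_XX[of v] adj_YX[of x y1] adj_XY[of v y3] by auto
        ultimately show False using xv by blast
      qed
    qed
  qed
qed

lemma arc_fwd: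
  assumes q: "(q1,q2) \<in> G'.AR" and \<rho>: "\<forall>c\<in>MB. c \<inter> X \<noteq> {v} \<longrightarrow> \<rho> c = pm c"
  shows "\<exists>c d. (c,d) \<in> AR \<and> \<rho> c = q1 \<and> \<rho> d = q2"
proof -
  have q1: "q1 \<in> G'.MB" and q2: "q2 \<in> G'.MB" and lt: "q1 \<inter> X \<subset> q2 \<inter> X"
    and nob: "\<not> (\<exists>c\<in>G'.MB. q1 \<inter> X \<subset> c \<inter> X \<and> c \<inter> X \<subset> q2 \<inter> X)"
    using q unfolding garc_iff by blast+
  have "fm q1 \<inter> X \<subset> fm q2 \<inter> X" using fm_lt[OF q1 q2] lt by blast
  hence tr: "(fm q1, fm q2) \<in> AR\<^sup>+" using lt_trancl fm_mb(1) q1 q2 by blast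
  have r1: "\<rho> (fm q1) = q1" using \<rho> fm_mb(1)[OF q1] fm_neq_v[OF q1] pm_fm[OF q1] by simp
  have r2: "\<rho> (fm q2) = q2" using \<rho> fm_mb(1)[OF q2] fm_neq_v[OF q2] pm_fm[OF q2] by simp
  have ne: "q1 \<noteq> q2" using lt by blast
  have cond: "\<forall>c\<in>MB. fm q1 \<inter> X \<subseteq> c \<inter> X \<and> c \<inter> X \<subseteq> fm q2 \<inter> X \<longrightarrow> \<rho> c = q1 \<or> \<rho> c = q2"
  proof (intro ballI impI)
    fix c assume c: "c \<in> MB" "fm q1 \<inter> X \<subseteq> c \<inter> X \<and> c \<inter> X \<subseteq> fm q2 \<inter> X"
    obtain x where x: "x \<in> q1 \<inter> X" using gm_Xne[OF q1] by blast
    have xc: "x \<in> c \<inter> X" "x \<noteq> v" using x c(2) fm_mb(3)[OF q1] gm_v[OF q1] by blast+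
    have cv: "c \<inter> X \<noteq> {v}" using xc by blast
    have pc: "pm c \<in> G'.MB" "pm c \<inter> X = c \<inter> X - {v}" using pm_mb[OF c(1) cv] by blast+
    have "q1 \<inter> X \<subseteq> pm c \<inter> X" using pc(2) c(2) fm_mb(2)[OF q1] by blast
    moreover have "pm c \<inter> X \<subseteq> q2 \<inter> X" using pc(2) c(2) fm_mb(2)[OF q2] by blast
    ultimately have "pm c \<inter> X = q1 \<inter> X \<or> pm c \<inter> X = q2 \<inter> X" using nob pc(1) by blast
    hence "pm c = q1 \<or> pm c = q2" using gm_eq[OF pc(1) q1] gm_eq[OF pc(1) q2] by blast
    thus "\<rho> c = q1 \<or> \<rho> c = q2" using \<rho> c(1) cv by simp
  qed
  show ?thesis using crossing[OF tr, of \<rho> q1 q2] cond r1 r2 ne by blast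
qed

end

context vx begin

abbreviation "HG \<equiv> Hgraph X Y E"
abbreviation "HG' \<equiv> Hgraph (X - {v}) Y (del_edges E v)"

lemma fst_HG: "fst HG = MB" and fst_HG': "fst HG' = G'.MB" unfolding Hgraph_def by simp_all

lemma contr_case:
  assumes DH: "distance_hereditary (X \<union> Y) E"
    and H: "\<forall>p\<in>MB. p \<inter> X = {v} \<longrightarrow> (p,e) \<in> AR \<and> (\<forall>e'. (p,e') \<in> AR \<longrightarrow> e' = e)"
  shows "iso_contraction HG' HG"
proof -
  define \<rho> where "\<rho> p = (if p \<inter> X = {v} then pm e else pm p)" for p
  define L where "L = {c \<in> MB. c \<notin> fm ` G'.MB \<and> c \<inter> X \<noteq> {v}}"
  define Z where "Z = {c \<in> MB. c \<inter> X = {v}}"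
  define F where "F = (\<lambda>c. (fm (pm c), c)) ` L \<union> (\<lambda>c. (c, e)) ` Z"
  have ep: "e \<in> MB \<and> e \<inter> X \<noteq> {v} \<and> (p,e) \<in> AR" if p: "p \<in> MB" "p \<inter> X = {v}" for p
  proof -
    have pe: "(p,e) \<in> AR" using H p by blast
    have e: "e \<in> MB" using arc_mb[OF pe] by blast
    have "p \<inter> X \<subset> e \<inter> X" using arc_lt[OF pe] .
    hence "e \<inter> X \<noteq> {v}" using p(2) by auto
    thus ?thesis using pe e by blast
  qed
  have \<rho>pm: "\<rho> c = pm c" if "c \<inter> X \<noteq> {v}" for c unfolding \<rho>_def using that by simp
  have \<rho>e: "\<rho> c = pm e" if "c \<inter> X = {v}" for c unfolding \<rho>_def using that by simp
  have nonc0: "(fm (pm p), p) \<in> conn_rel MB F" if p: "p \<in> MB" "p \<inter> X \<noteq> {v}" for p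
  proof (cases "p \<in> fm ` G'.MB")
    case True
    then obtain q where q: "q \<in> G'.MB" "p = fm q" by blast
    hence "fm (pm p) = p" using pm_fm[OF q(1)] by simp
    thus ?thesis using conn_rel_refl[OF p(1)] by simp
  next
    case False
    hence "p \<in> L" unfolding L_def using p by blast
    hence "(fm (pm p), p) \<in> F" unfolding F_def by (intro UnI1 imageI)
    moreover have "fm (pm p) \<in> MB" using fm_mb(1)[OF pm_mb(1)[OF p]] .
    ultimately show ?thesis using p(1) by (rule conn_rel_F)
  qed
  have "iso_contraction HG' HG"
  proof (rule contr_lemma[where \<rho>=\<rho> and s=fm and F=F])
    show "F \<subseteq> snd HG"
    proof
      fix x assume "x \<in> F"
      then consider (l) c where "x = (fm (pm c), c)" "c \<in> L" | (z) c where "x = (c,e)" "c \<in> Z"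
        unfolding F_def by blast
      thus "x \<in> snd HG"
      proof cases
        case l
        have c: "c \<in> MB" "c \<inter> X \<noteq> {v}" "c \<notin> fm ` G'.MB" using l(2) unfolding L_def by blast+
        show ?thesis using lost(3)[OF c] l(1) by simp
      next
        case z
        have c: "c \<in> MB" "c \<inter> X = {v}" using z(2) unfolding Z_def by blast+
        show ?thesis using ep[OF c] z(1) by simp
      qed
    qed
    show "\<forall>p\<in>fst HG. \<rho> p \<in> fst HG'"
    proof
      fix p assume "p \<in> fst HG"
      hence p: "p \<in> MB" using fst_HG by simp
      show "\<rho> p \<in> fst HG'"
      proof (cases "p \<inter> X = {v}")
        case True
        have e: "e \<in> MB" "e \<inter> X \<noteq> {v}" using ep[OF p True] by blast+
        have "pm e \<in> G'.MB" using e by (rule pm_mb(1))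
        thus ?thesis using \<rho>e[OF True] fst_HG' by simp
      next
        case False
        have "pm p \<in> G'.MB" using p False by (rule pm_mb(1))
        thus ?thesis using \<rho>pm[OF False] fst_HG' by simp
      qed
    qed
    show "\<forall>q\<in>fst HG'. fm q \<in> fst HG \<and> \<rho> (fm q) = q"
    proof
      fix q assume "q \<in> fst HG'"
      hence q: "q \<in> G'.MB" using fst_HG' by simp
      have "fm q \<in> MB" using fm_mb(1)[OF q] .
      moreover have "\<rho> (fm q) = pm (fm q)" using \<rho>pm[OF fm_neq_v[OF q]] .
      ultimately show "fm q \<in> fst HG \<and> \<rho> (fm q) = q" using pm_fm[OF q] fst_HG by simp
    qed
    show "\<forall>(a,b)\<in>F. \<rho> a = \<rho> b"
    proof (intro ballI, clarify)
      fix a b assume "(a,b) \<in> F"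
      then consider (l) c where "(a,b) = (fm (pm c), c)" "c \<in> L" | (z) c where "(a,b) = (c,e)" "c \<in> Z"
        unfolding F_def by blast
      thus "\<rho> a = \<rho> b"
      proof cases
        case l
        have c: "c \<in> MB" "c \<inter> X \<noteq> {v}" using l(2) unfolding L_def by blast+
        have ab: "a = fm (pm c)" "b = c" using l(1) by simp_all
        have q: "pm c \<in> G'.MB" using c by (rule pm_mb(1))
        have "\<rho> a = pm (fm (pm c))" using \<rho>pm[OF fm_neq_v[OF q]] ab(1) by simp
        also have "\<dots> = pm c" using pm_fm[OF q] .
        also have "\<dots> = \<rho> b" using \<rho>pm[OF c(2)] ab(2) by simp
        finally show ?thesis .
      next
        case z
        have c: "c \<in> MB" "c \<inter> X = {v}" using z(2) unfolding Z_def by blast+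
        have ab: "a = c" "b = e" using z(1) by simp_all
        have ev: "e \<inter> X \<noteq> {v}" using ep[OF c] by blast
        show ?thesis using \<rho>e[OF c(2)] \<rho>pm[OF ev] ab by simp
      qed
    qed
    show "\<forall>p\<in>fst HG. (fm (\<rho> p), p) \<in> conn_rel (fst HG) F"
    proof
      fix p assume "p \<in> fst HG"
      hence p: "p \<in> MB" using fst_HG by simp
      show "(fm (\<rho> p), p) \<in> conn_rel (fst HG) F"
      proof (cases "p \<inter> X = {v}")
        case False thus ?thesis using nonc0[OF p False] \<rho>pm[OF False] fst_HG by simp
      next
        case True
        have e: "e \<in> MB" "e \<inter> X \<noteq> {v}" using ep[OF p True] by blast+
        have "p \<in> Z" unfolding Z_def using p True by blast
        hence "(p,e) \<in> F" unfolding F_def by (intro UnI2 imageI)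
        hence 1: "(e,p) \<in> conn_rel MB F" using p e(1) by (rule conn_rel_Finv)
        have 2: "(fm (pm e), e) \<in> conn_rel MB F" using nonc0[OF e] .
        have "(fm (pm e), p) \<in> conn_rel MB F" using 2 1 by (rule conn_rel_trans)
        thus ?thesis using \<rho>e[OF True] fst_HG by simp
      qed
    qed
    show "\<forall>q1\<in>fst HG'. \<forall>q2\<in>fst HG'. (q1, q2) \<in> snd HG' \<longleftrightarrow>
        q1 \<noteq> q2 \<and> (\<exists>a\<in>fst HG. \<exists>b\<in>fst HG. \<rho> a = q1 \<and> \<rho> b = q2 \<and> (a, b) \<in> snd HG)"
    proof (intro ballI iffI)
      fix q1 q2 assume a: "(q1, q2) \<in> snd HG'"
      have "q1 \<noteq> q2" using a unfolding garc_iff by blast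
      moreover have "\<forall>c\<in>MB. c \<inter> X \<noteq> {v} \<longrightarrow> \<rho> c = pm c" using \<rho>pm by blast
      then obtain c d where cd: "(c,d) \<in> AR" "\<rho> c = q1" "\<rho> d = q2" using arc_fwd[OF a] by blast
      moreover have "c \<in> MB" "d \<in> MB" using arc_mb[OF cd(1)] by blast+
      ultimately show "q1 \<noteq> q2 \<and> (\<exists>a\<in>fst HG. \<exists>b\<in>fst HG. \<rho> a = q1 \<and> \<rho> b = q2 \<and> (a, b) \<in> snd HG)"
        unfolding fst_HG by blast
    next
      fix q1 q2 assume r: "q1 \<noteq> q2 \<and> (\<exists>a\<in>fst HG. \<exists>b\<in>fst HG. \<rho> a = q1 \<and> \<rho> b = q2 \<and> (a, b) \<in> snd HG)"
      then obtain a b where ab: "a \<in> MB" "b \<in> MB" "\<rho> a = q1" "\<rho> b = q2" "(a,b) \<in> AR" "q1 \<noteq> q2"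
        unfolding fst_HG by blast
      have av: "a \<inter> X \<noteq> {v}"
      proof
        assume av: "a \<inter> X = {v}"
        hence "b = e" using H ab(1,5) by blast
        hence "\<rho> b = pm e" using ep[OF ab(1) av] \<rho>pm by simp
        moreover have "\<rho> a = pm e" using \<rho>e[OF av] .
        ultimately show False using ab by simp
      qed
      have bv: "b \<inter> X \<noteq> {v}"
      proof
        assume "b \<inter> X = {v}"
        moreover have "a \<inter> X \<subset> b \<inter> X" using ab(5) by (rule arc_lt)
        ultimately have "a \<inter> X = {}" by (metis psubset_eq subset_singletonD)
        thus False using mb_Xne[OF ab(1)] by simp
      qed
      have "q1 = pm a" "q2 = pm b" using \<rho>pm[OF av] \<rho>pm[OF bv] ab(3,4) by simp_all
      moreover hence "pm a \<noteq> pm b" using ab(6) by simp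
      ultimately show "(q1,q2) \<in> snd HG'" using arc_back[OF DH ab(5) av] by simp
    qed
  qed
  thus ?thesis .
qed

lemma ind_case:
  assumes c0: "c0 \<in> MB" "c0 \<inter> X = {v}" and noarc: "\<forall>e. (c0,e) \<notin> AR"
  shows "iso_induced_subgraph HG' HG"
  unfolding iso_induced_subgraph_def fst_HG fst_HG'
proof (intro exI conjI)
  show "inj_on fm G'.MB" by (rule fm_inj)
  show "fm ` G'.MB \<subseteq> MB" using fm_mb(1) by blast
  show "\<forall>u\<in>G'.MB. \<forall>w\<in>G'.MB. ((u, w) \<in> snd HG') = ((fm u, fm w) \<in> snd HG)"
  proof (intro ballI iffI)
    fix q1 q2 assume q: "q1 \<in> G'.MB" "q2 \<in> G'.MB" and a: "(fm q1, fm q2) \<in> snd HG"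
    have lt: "fm q1 \<inter> X \<subset> fm q2 \<inter> X" and nob: "\<not> (\<exists>C\<in>MB. fm q1 \<inter> X \<subset> C \<inter> X \<and> C \<inter> X \<subset> fm q2 \<inter> X)"
      using a unfolding arc_iff by blast+
    show "(q1,q2) \<in> snd HG'" unfolding garc_iff
    proof (intro conjI)
      show "q1 \<in> G'.MB" "q2 \<in> G'.MB" by fact+
      show "q1 \<inter> X \<subset> q2 \<inter> X" using fm_lt[OF q] lt by blast
      show "\<not> (\<exists>c\<in>G'.MB. q1 \<inter> X \<subset> c \<inter> X \<and> c \<inter> X \<subset> q2 \<inter> X)"
      proof
        assume "\<exists>c\<in>G'.MB. q1 \<inter> X \<subset> c \<inter> X \<and> c \<inter> X \<subset> q2 \<inter> X"
        then obtain c where c: "c \<in> G'.MB" "q1 \<inter> X \<subset> c \<inter> X" "c \<inter> X \<subset> q2 \<inter> X" by blast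
        have "fm q1 \<inter> X \<subset> fm c \<inter> X" using fm_lt[OF q(1) c(1)] c(2) by simp
        moreover have "fm c \<inter> X \<subset> fm q2 \<inter> X" using fm_lt[OF c(1) q(2)] c(3) by simp
        ultimately show False using nob fm_mb(1)[OF c(1)] by blast
      qed
    qed
  next
    fix q1 q2 assume q: "q1 \<in> G'.MB" "q2 \<in> G'.MB" and a: "(q1, q2) \<in> snd HG'"
    have lt: "q1 \<inter> X \<subset> q2 \<inter> X" and nob: "\<not> (\<exists>c\<in>G'.MB. q1 \<inter> X \<subset> c \<inter> X \<and> c \<inter> X \<subset> q2 \<inter> X)"
      using a unfolding garc_iff by blast+
    show "(fm q1, fm q2) \<in> snd HG" unfolding arc_iff
    proof (intro conjI)
      show "fm q1 \<in> MB" "fm q2 \<in> MB" using fm_mb(1) q by blast+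
      show "fm q1 \<inter> X \<subset> fm q2 \<inter> X" using fm_lt[OF q] lt by blast
      show "\<not> (\<exists>C\<in>MB. fm q1 \<inter> X \<subset> C \<inter> X \<and> C \<inter> X \<subset> fm q2 \<inter> X)"
      proof
        assume "\<exists>C\<in>MB. fm q1 \<inter> X \<subset> C \<inter> X \<and> C \<inter> X \<subset> fm q2 \<inter> X"
        then obtain C where C: "C \<in> MB" "fm q1 \<inter> X \<subset> C \<inter> X" "C \<inter> X \<subset> fm q2 \<inter> X" by blast
        obtain x where x: "x \<in> q1 \<inter> X" using gm_Xne[OF q(1)] by blast
        have xC: "x \<in> C \<inter> X" "x \<noteq> v" using x C(2) fm_mb(3)[OF q(1)] gm_v[OF q(1)] by blast+
        have Cv: "C \<inter> X \<noteq> {v}" using xC by blast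
        show False
        proof (cases "C \<in> fm ` G'.MB")
          case True
          then obtain q3 where q3: "q3 \<in> G'.MB" "C = fm q3" by blast
          have "q1 \<inter> X \<subset> q3 \<inter> X" using fm_lt[OF q(1) q3(1)] C(2) q3(2) by simp
          moreover have "q3 \<inter> X \<subset> q2 \<inter> X" using fm_lt[OF q3(1) q(2)] C(3) q3(2) by simp
          ultimately show False using nob q3(1) by blast
        next
          case False
          have "v \<in> C" using lost(1)[OF C(1) Cv False] .
          hence vC: "v \<in> C \<inter> X" using vX by blast
          have "c0 \<inter> X \<subset> C \<inter> X" unfolding c0(2) using vC xC by blast
          hence "(c0, C) \<in> AR\<^sup>+" by (rule lt_trancl[OF c0(1) C(1)])
          then obtain e where "(c0,e) \<in> AR" using tranclD by metis
          thus False using noarc by blast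
        qed
      qed
    qed
  qed
qed

end

context vx begin

lemma cover_int:
  assumes c0: "c0 \<in> MB" "c0 \<inter> X = {v}" and ce: "(c0,e) \<in> AR" and s: "s \<in> e \<inter> X" "s \<noteq> v"
  shows "e \<inter> X = D (U {v,s})" "e \<inter> Y = U {v,s}"
proof -
  have e: "e \<in> MB" and lt: "c0 \<inter> X \<subset> e \<inter> X"
    and nob: "\<not> (\<exists>C\<in>MB. c0 \<inter> X \<subset> C \<inter> X \<and> C \<inter> X \<subset> e \<inter> X)"
    using ce unfolding arc_iff by blast+
  have ve: "v \<in> e \<inter> X" using lt c0(2) by blast
  have sub: "{v,s} \<subseteq> e \<inter> X" using ve s by blast
  have "U (e \<inter> X) \<subseteq> U {v,s}" by (rule U_anti[OF sub])
  hence ey: "e \<inter> Y \<subseteq> U {v,s}" using mb_int[OF e] by simp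
  have une: "U {v,s} \<noteq> {}" using ey mb_Yne[OF e] by blast
  have vsX: "{v,s} \<subseteq> X" using sub by blast
  have vsne: "{v,s} \<noteq> {}" by simp
  note k = cl_mb[OF vsX vsne une]
  have kle: "D (U {v,s}) \<subseteq> e \<inter> X" by (rule cl_le[OF e sub])
  have c0k: "c0 \<inter> X \<subset> cl {v,s} \<inter> X" using c0(2) k(4) s(2) by blast
  have keq: "cl {v,s} \<inter> X = e \<inter> X"
  proof (rule ccontr)
    assume "cl {v,s} \<inter> X \<noteq> e \<inter> X"
    hence "cl {v,s} \<inter> X \<subset> e \<inter> X" using kle k(2) by blast
    thus False using nob k(1) c0k by blast
  qed
  show "e \<inter> X = D (U {v,s})" using keq k(2) by simp
  have "cl {v,s} = e" using mb_eq[OF k(1) e keq] .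
  thus "e \<inter> Y = U {v,s}" using k(3) by simp
qed

lemma cover_out:
  assumes c0: "c0 \<in> MB" "c0 \<inter> X = {v}" and a1: "(c0,e1) \<in> AR" and a2: "(c0,e2) \<in> AR"
    and ne: "e1 \<noteq> e2" and t: "t \<in> e2 \<inter> X" "t \<noteq> v"
  shows "t \<notin> e1"
proof
  assume te: "t \<in> e1"
  have e1: "e1 \<in> MB" and lt1: "c0 \<inter> X \<subset> e1 \<inter> X"
    and nob: "\<not> (\<exists>C\<in>MB. c0 \<inter> X \<subset> C \<inter> X \<and> C \<inter> X \<subset> e1 \<inter> X)"
    using a1 unfolding arc_iff by blast+
  have e2: "e2 \<in> MB" and lt2: "c0 \<inter> X \<subset> e2 \<inter> X" using a2 unfolding arc_iff by blast+
  have "e2 \<inter> X = D (U {v,t})" by (rule cover_int(1)[OF c0 a2 t])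
  moreover have "{v,t} \<subseteq> e1 \<inter> X" using te t lt1 c0(2) by blast
  hence "D (U {v,t}) \<subseteq> e1 \<inter> X" by (rule cl_le[OF e1])
  ultimately have "e2 \<inter> X \<subseteq> e1 \<inter> X" by simp
  moreover have "e2 \<inter> X \<noteq> e1 \<inter> X" using mb_eq[OF e2 e1] ne by blast
  ultimately have "e2 \<inter> X \<subset> e1 \<inter> X" by blast
  thus False using nob e2 lt2 by blast
qed

lemma cover_vx: assumes c0: "c0 \<inter> X = {v}" and a: "(c0,e) \<in> AR"
  shows "\<exists>s. s \<in> e \<inter> X \<and> s \<noteq> v" "v \<in> e \<inter> X"
proof -
  have "c0 \<inter> X \<subset> e \<inter> X" using a by (rule arc_lt)
  thus "\<exists>s. s \<in> e \<inter> X \<and> s \<noteq> v" "v \<in> e \<inter> X" using c0 by blast+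
qed

lemma cover_disj:
  assumes DH: "distance_hereditary (X \<union> Y) E"
    and c0: "c0 \<in> MB" "c0 \<inter> X = {v}" and a1: "(c0,e1) \<in> AR" and a2: "(c0,e2) \<in> AR"
    and ne: "e1 \<noteq> e2"
  shows "e1 \<inter> Y \<inter> (e2 \<inter> Y) = {}"
proof (rule ccontr)
  assume "e1 \<inter> Y \<inter> (e2 \<inter> Y) \<noteq> {}"
  then obtain y where y: "y \<in> e1 \<inter> Y" "y \<in> e2 \<inter> Y" by blast
  have e1: "e1 \<in> MB" using arc_mb[OF a1] by blast
  have e2: "e2 \<in> MB" using arc_mb[OF a2] by blast
  obtain s where s: "s \<in> e1 \<inter> X" "s \<noteq> v" using cover_vx(1)[OF c0(2) a1] by blast
  obtain t where t: "t \<in> e2 \<inter> X" "t \<noteq> v" using cover_vx(1)[OF c0(2) a2] by blast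
  have v1: "v \<in> e1 \<inter> X" using cover_vx(2)[OF c0(2) a1] .
  have v2: "v \<in> e2 \<inter> X" using cover_vx(2)[OF c0(2) a2] .
  have te: "t \<notin> e1" by (rule cover_out[OF c0 a1 a2 ne t])
  have se: "s \<notin> e2" by (rule cover_out[OF c0 a2 a1 ne[symmetric] s])
  obtain w where w: "w \<in> e1 \<inter> Y" "(t,w) \<notin> E" using mb_nonedge[OF e1] t(1) te by blast
  obtain w' where w': "w' \<in> e2 \<inter> Y" "(s,w') \<notin> E" using mb_nonedge[OF e2] s(1) se by blast
  have E1: "(s,w) \<in> E" using mb_edge[OF e1 s(1) w(1)] .
  have E2: "(v,w) \<in> E" using mb_edge[OF e1 v1 w(1)] .
  have E3: "(v,w') \<in> E" using mb_edge[OF e2 v2 w'(1)] .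
  have E4: "(t,w') \<in> E" using mb_edge[OF e2 t(1) w'(1)] .
  have E5: "(s,y) \<in> E" using mb_edge[OF e1 s(1) y(1)] .
  have E6: "(t,y) \<in> E" using mb_edge[OF e2 t(1) y(2)] .
  have XY: "s \<in> X" "t \<in> X" "v \<in> X" "w \<in> Y" "w' \<in> Y" "y \<in> Y"
    using s t vX w w' y by blast+
  have "s = t \<or> adj E s t \<or> (\<exists>x\<in>{s,w,v,w',t}. adj E s x \<and> adj E x t)"
    by (rule p5[OF DH, of s w v w' t y]) (use XY E1 E2 E3 E4 E5 E6 in \<open>simp_all add: adj_XY adj_YX\<close>)
  moreover have "s \<noteq> t" using se t by blast
  moreover have "\<not> adj E s t" using adj_XX XY by blast
  moreover have "\<not> (adj E s x \<and> adj E x t)" if "x \<in> {s,w,v,w',t}" for x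
    using that XY w(2) w'(2) adj_XX[of s] adj_YX[of t w] adj_XY[of s w'] by auto
  ultimately show False by blast
qed

abbreviation "RT \<equiv> adjrel E (X \<union> Y - {v})"

lemma sep:
  assumes DH: "distance_hereditary (X \<union> Y) E"
    and c0: "c0 \<in> MB" "c0 \<inter> X = {v}" and a1: "(c0,e1) \<in> AR" and a2: "(c0,e2) \<in> AR"
    and ne: "e1 \<noteq> e2" and y1: "y1 \<in> e1 \<inter> Y" and y2: "y2 \<in> e2 \<inter> Y"
  shows "(y1,y2) \<notin> RT\<^sup>*"
proof
  assume path: "(y1,y2) \<in> RT\<^sup>*"
  have e1: "e1 \<in> MB" using arc_mb[OF a1] by blast
  have e2: "e2 \<in> MB" using arc_mb[OF a2] by blast
  have v1: "v \<in> e1 \<inter> X" using cover_vx(2)[OF c0(2) a1] .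
  have v2: "v \<in> e2 \<inter> X" using cover_vx(2)[OF c0(2) a2] .
  have Ev1: "(v,y1) \<in> E" using mb_edge[OF e1 v1 y1] .
  have Ev2: "(v,y2) \<in> E" using mb_edge[OF e2 v2 y2] .
  have TV: "X \<union> Y - {v} \<subseteq> X \<union> Y" by blast
  have y1T: "y1 \<in> X \<union> Y - {v}" using y1 vY by blast
  have vV: "v \<in> X \<union> Y" using vX by blast
  have "y1 = y2 \<or> adj E y1 y2 \<or> (\<exists>x\<in>X \<union> Y - {v}. adj E y1 x \<and> adj E x y2)"
    by (rule dh_component[OF DH TV y1T path vV]) (use Ev1 Ev2 vX in \<open>simp_all add: adj_XY adj_YX\<close>)
  moreover have "y1 \<noteq> y2" using cover_disj[OF DH c0 a1 a2 ne] y1 y2 by blast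
  moreover have "\<not> adj E y1 y2" using adj_YY y1 y2 by blast
  moreover have "\<not> (adj E y1 x \<and> adj E x y2)" if x: "x \<in> X \<union> Y - {v}" for x
  proof
    assume ax: "adj E y1 x \<and> adj E x y2"
    have xX: "x \<in> X"
    proof (rule ccontr)
      assume "x \<notin> X"
      hence "x \<in> Y" using x by blast
      thus False using ax adj_YY y1 by blast
    qed
    have xv: "x \<noteq> v" using x by blast
    have Ex1: "(x,y1) \<in> E" using ax adj_YX[OF xX, of y1] by blast
    have Ex2: "(x,y2) \<in> E" using ax adj_XY[OF xX, of y2] by blast
    have vxX: "{v,x} \<subseteq> X" using xX vX by blast
    have yU: "y1 \<in> U {v,x}" "y2 \<in> U {v,x}" unfolding up_def using y1 y2 Ev1 Ev2 Ex1 Ex2 by auto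
    have une: "U {v,x} \<noteq> {}" using yU by blast
    note k = cl_mb[OF vxX _ une]
    have km: "cl {v,x} \<in> MB" using k by simp
    have kX: "{v,x} \<subseteq> cl {v,x} \<inter> X" using k by simp
    have kY: "cl {v,x} \<inter> Y = U {v,x}" using k by simp
    have "c0 \<inter> X \<subset> cl {v,x} \<inter> X" using c0(2) kX xv by blast
    hence "(c0, cl {v,x}) \<in> AR\<^sup>+" by (rule lt_trancl[OF c0(1) km])
    then obtain e where ce: "(c0,e) \<in> AR" and ek: "(e, cl {v,x}) \<in> AR\<^sup>*" using tranclD by metis
    have e: "e \<in> MB" using arc_mb[OF ce] by blast
    have "e \<inter> X \<subseteq> cl {v,x} \<inter> X"
    proof (cases "e = cl {v,x}")
      case True thus ?thesis by simp
    next
      case False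
      hence "(e, cl {v,x}) \<in> AR\<^sup>+" using ek by (meson rtranclD)
      thus ?thesis using trancl_lt by blast
    qed
    hence "cl {v,x} \<inter> Y \<subseteq> e \<inter> Y" using mb_ext_le[OF e km] by blast
    hence ye: "y1 \<in> e \<inter> Y" "y2 \<in> e \<inter> Y" using kY yU by blast+
    have "e = e1"
    proof (rule ccontr)
      assume "e \<noteq> e1"
      thus False using cover_disj[OF DH c0 ce a1] ye y1 by blast
    qed
    moreover have "e = e2"
    proof (rule ccontr)
      assume "e \<noteq> e2"
      thus False using cover_disj[OF DH c0 ce a2] ye y2 by blast
    qed
    ultimately show False using ne by simp
  qed
  ultimately show False by blast
qed

lemma share:
  assumes q: "q \<in> G'.MB" "q' \<in> G'.MB" and x: "x \<in> q \<inter> X" "x \<in> q' \<inter> X"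
    and y: "y \<in> q \<inter> Y" "y' \<in> q' \<inter> Y"
  shows "(y,y') \<in> RT\<^sup>*"
proof -
  have E1: "(x,y) \<in> E" using gm_edge[OF q(1) x(1) y(1)] .
  have E2: "(x,y') \<in> E" using gm_edge[OF q(2) x(2) y(2)] .
  have xv: "x \<noteq> v" using gm_v[OF q(1)] x(1) by blast
  have xX: "x \<in> X" using x by blast
  have "(y,x) \<in> RT" unfolding adjrel_def using y xX xv vY E1 adj_YX[OF xX, of y] by auto
  moreover have "(x,y') \<in> RT" unfolding adjrel_def using y xX xv vY E2 adj_XY[OF xX, of y'] by auto
  ultimately show ?thesis by (meson r_into_rtrancl rtrancl_into_rtrancl)
qed

lemma comp_case:
  assumes DH: "distance_hereditary (X \<union> Y) E"
    and c0: "c0 \<in> MB" "c0 \<inter> X = {v}" and a1: "(c0,e1) \<in> AR" and a2: "(c0,e2) \<in> AR"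
    and ne: "e1 \<noteq> e2"
  shows "num_components HG' > num_components HG"
proof -
  define R where "R = conn_rel MB AR"
  define R' where "R' = conn_rel G'.MB G'.AR"
  have eR: "equiv MB R" unfolding R_def by (rule conn_rel_equiv)
  have eR': "equiv G'.MB R'" unfolding R'_def by (rule conn_rel_equiv)
  have e1: "e1 \<in> MB" "e1 \<inter> X \<noteq> {v}" using arc_mb[OF a1] cover_vx(1)[OF c0(2) a1] by blast+
  have e2: "e2 \<in> MB" "e2 \<inter> X \<noteq> {v}" using arc_mb[OF a2] cover_vx(1)[OF c0(2) a2] by blast+
  have nonc0R: "(fm (pm p), p) \<in> R" if p: "p \<in> MB" "p \<inter> X \<noteq> {v}" for p
    unfolding R_def by (rule lt_conn[OF fm_mb(1)[OF pm_mb(1)[OF p]] p(1) fm_pm_X(2)[OF p]])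
  have c0e1: "(c0,e1) \<in> R" unfolding R_def using lt_conn[OF c0(1) e1(1)] arc_lt[OF a1] by blast
  have c0e2: "(c0,e2) \<in> R" unfolding R_def using lt_conn[OF c0(1) e2(1)] arc_lt[OF a2] by blast
  have q1: "pm e1 \<in> G'.MB" using pm_mb(1)[OF e1] .
  have q2: "pm e2 \<in> G'.MB" using pm_mb(1)[OF e2] .
  have "card (MB // R) < card (G'.MB // R')"
  proof (rule card_quot_less[OF G'.finite_MB eR' eR, of fm "pm e1" "pm e2"])
    show "\<forall>q\<in>G'.MB. fm q \<in> MB" using fm_mb(1) by blast
    show "\<forall>q q'. (q,q') \<in> R' \<longrightarrow> (fm q, fm q') \<in> R"
    proof (intro allI impI)
      fix q q' assume qq: "(q,q') \<in> R'"
      have qm: "q \<in> G'.MB" "q' \<in> G'.MB" using qq conn_rel_sub unfolding R'_def by blast+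
      have "R `` {fm q} = R `` {fm q'}" using qq unfolding R'_def
      proof (rule conn_rel_invariant)
        fix a b assume ab: "(a,b) \<in> G'.AR" "a \<in> G'.MB" "b \<in> G'.MB"
        have "a \<inter> X \<subseteq> b \<inter> X" using ab(1) unfolding garc_iff by blast
        hence "fm a \<inter> X \<subseteq> fm b \<inter> X" using fm_le[OF ab(2,3)] by simp
        hence "(fm a, fm b) \<in> R" unfolding R_def by (rule lt_conn[OF fm_mb(1)[OF ab(2)] fm_mb(1)[OF ab(3)]])
        thus "R `` {fm a} = R `` {fm b}" by (rule equiv_class_eq[OF eR])
      qed
      thus "(fm q, fm q') \<in> R" using eq_equiv_class_iff[OF eR fm_mb(1)[OF qm(1)] fm_mb(1)[OF qm(2)]] by simp
    qed
    show "\<forall>p\<in>MB. \<exists>q\<in>G'.MB. (fm q, p) \<in> R"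
    proof
      fix p assume p: "p \<in> MB"
      show "\<exists>q\<in>G'.MB. (fm q, p) \<in> R"
      proof (cases "p \<inter> X = {v}")
        case False thus ?thesis using nonc0R[OF p False] pm_mb(1)[OF p False] by blast
      next
        case True
        hence "p = c0" using mb_eq[OF p c0(1)] c0(2) by simp
        have "(fm (pm e1), e1) \<in> R" using nonc0R[OF e1] .
        moreover have "(e1, p) \<in> R" using c0e1 \<open>p = c0\<close> unfolding R_def by (simp add: conn_rel_sym)
        ultimately have "(fm (pm e1), p) \<in> R" unfolding R_def by (rule conn_rel_trans)
        thus ?thesis using q1 by blast
      qed
    qed
    show "pm e1 \<in> G'.MB" "pm e2 \<in> G'.MB" by fact+
    show "(fm (pm e1), fm (pm e2)) \<in> R"
    proof -
      have 1: "(fm (pm e1), e1) \<in> R" using nonc0R[OF e1] .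
      have 2: "(e1, c0) \<in> R" using c0e1 unfolding R_def by (rule conn_rel_sym)
      have 3: "(e2, fm (pm e2)) \<in> R" using nonc0R[OF e2] unfolding R_def by (rule conn_rel_sym)
      show ?thesis using 1 2 c0e2 3 unfolding R_def by (meson conn_rel_trans)
    qed
    show "(pm e1, pm e2) \<notin> R'"
    proof
      assume qq: "(pm e1, pm e2) \<in> R'"
      define lab where "lab q = {w. \<exists>y\<in>q \<inter> Y. (y,w) \<in> RT\<^sup>*}" for q
      have "lab (pm e1) = lab (pm e2)" using qq unfolding R'_def
      proof (rule conn_rel_invariant)
        fix a b assume ab: "(a,b) \<in> G'.AR" "a \<in> G'.MB" "b \<in> G'.MB"
        have sub: "a \<inter> X \<subseteq> b \<inter> X" using ab(1) unfolding garc_iff by blast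
        obtain x where x: "x \<in> a \<inter> X" using gm_Xne[OF ab(2)] by blast
        have xb: "x \<in> b \<inter> X" using x sub by blast
        obtain ya where ya: "ya \<in> a \<inter> Y" using gm_Yne[OF ab(2)] by blast
        obtain yb where yb: "yb \<in> b \<inter> Y" using gm_Yne[OF ab(3)] by blast
        show "lab a = lab b"
        proof
          show "lab a \<subseteq> lab b"
          proof
            fix w assume "w \<in> lab a"
            then obtain y where y: "y \<in> a \<inter> Y" "(y,w) \<in> RT\<^sup>*" unfolding lab_def by blast
            have "(yb, y) \<in> RT\<^sup>*" using share[OF ab(3) ab(2) xb x yb y(1)] .
            hence "(yb, w) \<in> RT\<^sup>*" using y(2) by (rule rtrancl_trans)
            thus "w \<in> lab b" unfolding lab_def using yb by blast
          qed
          show "lab b \<subseteq> lab a"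
          proof
            fix w assume "w \<in> lab b"
            then obtain y where y: "y \<in> b \<inter> Y" "(y,w) \<in> RT\<^sup>*" unfolding lab_def by blast
            have "(ya, y) \<in> RT\<^sup>*" using share[OF ab(2) ab(3) x xb ya y(1)] .
            hence "(ya, w) \<in> RT\<^sup>*" using y(2) by (rule rtrancl_trans)
            thus "w \<in> lab a" unfolding lab_def using ya by blast
          qed
        qed
      qed
      obtain y1 where y1: "y1 \<in> e1 \<inter> Y" using mb_Yne[OF e1(1)] by blast
      obtain y2 where y2: "y2 \<in> e2 \<inter> Y" using mb_Yne[OF e2(1)] by blast
      have y1q: "y1 \<in> pm e1 \<inter> Y" using pm_mb(4)[OF e1] y1 by blast
      have y2q: "y2 \<in> pm e2 \<inter> Y" using pm_mb(4)[OF e2] y2 by blast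
      have "y2 \<in> lab (pm e2)" unfolding lab_def using y2q by blast
      hence "y2 \<in> lab (pm e1)" using \<open>lab (pm e1) = lab (pm e2)\<close> by simp
      then obtain y where y: "y \<in> pm e1 \<inter> Y" "(y,y2) \<in> RT\<^sup>*" unfolding lab_def by blast
      obtain x where x: "x \<in> pm e1 \<inter> X" using gm_Xne[OF q1] by blast
      have "(y1,y) \<in> RT\<^sup>*" using share[OF q1 q1 x x y1q y(1)] .
      hence "(y1,y2) \<in> RT\<^sup>*" using y(2) by (rule rtrancl_trans)
      thus False using sep[OF DH c0 a1 a2 ne y1 y2] by simp
    qed
  qed
  thus ?thesis unfolding num_components_def fst_HG fst_HG' R_def R'_def by simp
qed

theorem main_X:
  assumes DH: "distance_hereditary (X \<union> Y) E"
  shows "num_components HG' > num_components HG \<or> iso_induced_subgraph HG' HG \<or> iso_contraction HG' HG"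
proof (cases "\<exists>c0\<in>MB. c0 \<inter> X = {v}")
  case True
  then obtain c0 where c0: "c0 \<in> MB" "c0 \<inter> X = {v}" by blast
  have uniq: "p = c0" if "p \<in> MB" "p \<inter> X = {v}" for p using mb_eq[OF that(1) c0(1)] that(2) c0(2) by simp
  show ?thesis
  proof (cases "\<exists>e. (c0,e) \<in> AR")
    case False
    thus ?thesis using ind_case[OF c0] by blast
  next
    case True
    then obtain e where ce: "(c0,e) \<in> AR" by blast
    show ?thesis
    proof (cases "\<exists>e'. (c0,e') \<in> AR \<and> e' \<noteq> e")
      case True
      then obtain e' where "(c0,e') \<in> AR" "e' \<noteq> e" by blast
      thus ?thesis using comp_case[OF DH c0 ce] by metis
    next
      case False
      have "\<forall>p\<in>MB. p \<inter> X = {v} \<longrightarrow> (p,e) \<in> AR \<and> (\<forall>e'. (p,e') \<in> AR \<longrightarrow> e' = e)"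
        using uniq ce False by blast
      thus ?thesis using contr_case[OF DH] by blast
    qed
  qed
next
  case False
  hence "\<forall>p\<in>MB. p \<inter> X = {v} \<longrightarrow> (p,undefined) \<in> AR \<and> (\<forall>e'. (p,e') \<in> AR \<longrightarrow> e' = undefined)"
    by blast
  thus ?thesis using contr_case[OF DH] by blast
qed

end

definition rv :: "'b digraph \<Rightarrow> 'b digraph" where "rv H = (fst H, (snd H)\<inverse>)"

lemma rv_rv: "rv (rv H) = H" unfolding rv_def by simp

lemma conn_rel_conv: "conn_rel V (F\<inverse>) = conn_rel V F"
proof -
  have "(F\<inverse> \<inter> V \<times> V) \<union> (F\<inverse> \<inter> V \<times> V)\<inverse> = (F \<inter> V \<times> V) \<union> (F \<inter> V \<times> V)\<inverse>" by auto
  thus ?thesis unfolding conn_rel_def by simp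
qed

lemma num_components_rv: "num_components (rv H) = num_components H"
  unfolding num_components_def rv_def by (simp add: conn_rel_conv)

lemma iso_ind_rv: "iso_induced_subgraph H1 H2 \<Longrightarrow> iso_induced_subgraph (rv H1) (rv H2)"
  unfolding iso_induced_subgraph_def rv_def by auto

lemma digraph_iso_rv: "digraph_iso H1 H2 \<Longrightarrow> digraph_iso (rv H1) (rv H2)"
  unfolding digraph_iso_def rv_def by auto

lemma contract_rv: "contract (rv H) (F\<inverse>) = rv (contract H F)"
  unfolding contract_def rv_def Let_def conn_rel_conv by auto

lemma iso_contr_rv: "iso_contraction H1 H2 \<Longrightarrow> iso_contraction (rv H1) (rv H2)"
proof -
  assume "iso_contraction H1 H2"
  then obtain F where F: "F \<subseteq> snd H2" "digraph_iso H1 (contract H2 F)" unfolding iso_contraction_def by blast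
  have "F\<inverse> \<subseteq> snd (rv H2)" using F(1) unfolding rv_def by auto
  moreover have "digraph_iso (rv H1) (contract (rv H2) (F\<inverse>))"
    using digraph_iso_rv[OF F(2)] contract_rv by metis
  ultimately show ?thesis unfolding iso_contraction_def by blast
qed

lemma adj_conv: "adj (E\<inverse>) = adj E" unfolding adj_def by (intro ext) auto
lemma walk_conv: "is_walk_in (E\<inverse>) = is_walk_in E" unfolding is_walk_in_def adj_conv ..
lemma gdist_conv: "gdist (E\<inverse>) = gdist E" unfolding gdist_def walk_conv ..
lemma connected_conv: "connected_in (E\<inverse>) = connected_in E" unfolding connected_in_def walk_conv ..
lemma dh_conv: "distance_hereditary V (E\<inverse>) = distance_hereditary V E"
  unfolding distance_hereditary_def connected_conv gdist_conv ..

lemma bg_conv: "bipartite_graph X Y E \<Longrightarrow> bipartite_graph Y X (E\<inverse>)"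
  unfolding bipartite_graph_def by auto

lemma biclique_conv: "biclique Y X (E\<inverse>) = biclique X Y E"
  unfolding biclique_def by (intro ext) blast

lemma mb_conv: "max_bicliques Y X (E\<inverse>) = max_bicliques X Y E"
  unfolding max_bicliques_def biclique_conv ..

lemma del_conv: "del_edges (E\<inverse>) v = (del_edges E v)\<inverse>"
  unfolding del_edges_def by auto

lemma hgraph_conv: assumes bg: "bipartite_graph X Y E"
  shows "Hgraph Y X (E\<inverse>) = rv (Hgraph X Y E)"
proof -
  interpret bip X Y E by (rule bip.intro[OF bg])
  have lt: "bc_less Y B B' \<longleftrightarrow> bc_less X B' B" if "B \<in> MB" "B' \<in> MB" for B B'
    unfolding bc_less_def bc_le_def using mb_ext_lt[OF that(2,1)] by blast
  have memb: "(B,B') \<in> snd (Hgraph Y X (E\<inverse>)) \<longleftrightarrow> (B',B) \<in> snd (Hgraph X Y E)" for B B'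
  proof (cases "B \<in> MB \<and> B' \<in> MB")
    case True
    have l1: "bc_less Y B B' \<longleftrightarrow> bc_less X B' B" using lt True by blast
    have l2: "(\<exists>C\<in>MB. bc_less Y B C \<and> bc_less Y C B') \<longleftrightarrow> (\<exists>C\<in>MB. bc_less X B' C \<and> bc_less X C B)"
    proof
      assume "\<exists>C\<in>MB. bc_less Y B C \<and> bc_less Y C B'"
      then obtain C where C: "C \<in> MB" "bc_less Y B C" "bc_less Y C B'" by blast
      hence "bc_less X B' C" "bc_less X C B" using lt True by blast+
      thus "\<exists>C\<in>MB. bc_less X B' C \<and> bc_less X C B" using C(1) by blast
    next
      assume "\<exists>C\<in>MB. bc_less X B' C \<and> bc_less X C B"
      then obtain C where C: "C \<in> MB" "bc_less X B' C" "bc_less X C B" by blast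
      hence "bc_less Y B C" "bc_less Y C B'" using lt True by blast+
      thus "\<exists>C\<in>MB. bc_less Y B C \<and> bc_less Y C B'" using C(1) by blast
    qed
    show ?thesis using True l1 l2 unfolding Hgraph_def mb_conv snd_conv mem_Collect_eq prod.case by blast
  next
    case False
    thus ?thesis unfolding Hgraph_def mb_conv snd_conv by auto
  qed
  have "snd (Hgraph Y X (E\<inverse>)) = (snd (Hgraph X Y E))\<inverse>"
  proof (rule set_eqI)
    fix p :: "'a set \<times> 'a set"
    obtain B B' where "p = (B,B')" by fastforce
    thus "p \<in> snd (Hgraph Y X (E\<inverse>)) \<longleftrightarrow> p \<in> (snd (Hgraph X Y E))\<inverse>" using memb by simp
  qed
  moreover have "fst (Hgraph Y X (E\<inverse>)) = fst (Hgraph X Y E)" unfolding Hgraph_def mb_conv by simp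
  ultimately show ?thesis unfolding rv_def by (metis prod.collapse)
qed

theorem theorem4:
  fixes X Y :: "'a set" and E :: "('a \<times> 'a) set" and v :: 'a
  assumes "BDH X Y E"
    and "\<not> has_universal_vertex X Y E"
    and "v \<in> X \<union> Y"
  shows "num_components (Hgraph (X - {v}) (Y - {v}) (del_edges E v)) > num_components (Hgraph X Y E)
       \<or> iso_induced_subgraph (Hgraph (X - {v}) (Y - {v}) (del_edges E v)) (Hgraph X Y E)
       \<or> iso_contraction (Hgraph (X - {v}) (Y - {v}) (del_edges E v)) (Hgraph X Y E)"
proof -
  have bgX: "bipartite_graph X Y E" and DHX: "distance_hereditary (X \<union> Y) E"
    using assms(1) unfolding BDH_def by auto
  have dXY: "X \<inter> Y = {}" using bgX unfolding bipartite_graph_def by auto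
  show ?thesis
  proof (cases "v \<in> X")
    case True
    have "Y - {v} = Y" using True dXY by blast
    moreover have "num_components (Hgraph (X - {v}) Y (del_edges E v)) > num_components (Hgraph X Y E)
       \<or> iso_induced_subgraph (Hgraph (X - {v}) Y (del_edges E v)) (Hgraph X Y E)
       \<or> iso_contraction (Hgraph (X - {v}) Y (del_edges E v)) (Hgraph X Y E)"
      by (rule vx.main_X[OF vx.intro[OF bip.intro[OF bgX] vx_axioms.intro[OF True]] DHX])
    ultimately show ?thesis by simp
  next
    case False
    hence vinY: "v \<in> Y" using assms(3) by blast
    have bgY: "bipartite_graph Y X (E\<inverse>)" by (rule bg_conv[OF bgX])
    have DHY: "distance_hereditary (Y \<union> X) (E\<inverse>)" using DHX dh_conv by (metis sup_commute)
    have Xv: "X - {v} = X" using vinY dXY by blast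
    have bgd: "bipartite_graph X (Y - {v}) (del_edges E v)"
      using bgX unfolding bipartite_graph_def del_edges_def by auto
    define H1 where "H1 = Hgraph X (Y - {v}) (del_edges E v)"
    define H2 where "H2 = Hgraph X Y E"
    have h1: "Hgraph (Y - {v}) X (del_edges (E\<inverse>) v) = rv H1"
      unfolding del_conv H1_def by (rule hgraph_conv[OF bgd])
    have h2: "Hgraph Y X (E\<inverse>) = rv H2" unfolding H2_def by (rule hgraph_conv[OF bgX])
    have "num_components (Hgraph (Y - {v}) X (del_edges (E\<inverse>) v)) > num_components (Hgraph Y X (E\<inverse>))
       \<or> iso_induced_subgraph (Hgraph (Y - {v}) X (del_edges (E\<inverse>) v)) (Hgraph Y X (E\<inverse>))
       \<or> iso_contraction (Hgraph (Y - {v}) X (del_edges (E\<inverse>) v)) (Hgraph Y X (E\<inverse>))"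
      by (rule vx.main_X[OF vx.intro[OF bip.intro[OF bgY] vx_axioms.intro[OF vinY]] DHY])
    hence r: "num_components (rv H1) > num_components (rv H2) \<or> iso_induced_subgraph (rv H1) (rv H2)
          \<or> iso_contraction (rv H1) (rv H2)"
      unfolding h1 h2 .
    have "num_components H1 > num_components H2 \<or> iso_induced_subgraph H1 H2 \<or> iso_contraction H1 H2"
    proof -
      { assume "num_components (rv H1) > num_components (rv H2)"
        hence ?thesis using num_components_rv[of H1] num_components_rv[of H2] by simp }
      moreover
      { assume "iso_induced_subgraph (rv H1) (rv H2)"
        hence "iso_induced_subgraph (rv (rv H1)) (rv (rv H2))" by (rule iso_ind_rv)
        hence ?thesis unfolding rv_rv by simp }
      moreover
      { assume "iso_contraction (rv H1) (rv H2)"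
        hence "iso_contraction (rv (rv H1)) (rv (rv H2))" by (rule iso_contr_rv)
        hence ?thesis unfolding rv_rv by simp }
      ultimately show ?thesis using r by blast
    qed
    thus ?thesis unfolding H1_def H2_def Xv .
  qed
qed

end
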